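(* Let $\mathcal{R}$ be a left-linear TRS and $\mathcal{C}\subseteq\mathcal{R}$ a confluent TRS, and let $\mathcal{P}=\mathsf{PCPS}(\mathcal{R},\mathcal{C})$. If every parallel critical pair $(t,u)$ between $\mathcal{R}$ and $\mathcal{R}$ satisfies $t\to^*_\mathcal{R}\cdot{}_\mathcal{R}\!\!\leftarrow^*u$ and $\mathcal{P}/\mathcal{R}$ is terminating, then $\mathcal{R}$ is confluent.
   Context: A TRS is a set of rules $\ell\to r$ ($\ell\notin\mathcal{V}$, $\mathcal{V}ar(r)\subseteq\mathcal{V}ar(\ell)$); left-linear: no variable repeated in a left-hand side; confluent: ${}_\mathcal{R}\!\!\leftarrow^*\cdot\to_\mathcal{R}^*\subseteq\to_\mathcal{R}^*\cdot{}_\mathcal{R}\!\!\leftarrow^*$. $\mathcal{P}/\mathcal{R}$ is terminating if the relation $\to_\mathcal{R}^*\cdot\to_\mathcal{P}\cdot\to_\mathcal{R}^*$ admits no infinite chain. $\leftrightarrow^*_\mathcal{C}$ is the conversion relation of $\mathcal{C}$. Parallel critical peak between $\mathcal{R}$ and $\mathcal{R}$: for variants $\ell\to r$ and $\ell_p\to r_p$ ($p\in P$) of $\mathcal{R}$-rules, all pairwise variable-disjoint, where $P$ is a non-empty set of pairwise parallel (no one a prefix of another) function-symbol positions of $\ell$, $\sigma$ a most general unifier of $\{\ell_p\approx\ell|_p\}_{p\in P}$, and $\ell_\epsilon\to r_\epsilon$ not a variant of $\ell\to r$ if $P=\{\epsilon\}$ (root): the peak with source $s=\ell\sigma$, left result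 $t=(\ell\sigma)[r_p\sigma]_{p\in P}$ and right result $u=r\sigma$; $(t,u)$ is a parallel critical pair. $\mathsf{PCPS}(\mathcal{R},\mathcal{C})$ is the TRS consisting of the rules $s\to t$ and $s\to u$ for every such parallel critical peak $(t,s,u)$ for which $t\leftrightarrow^*_\mathcal{C}u$ does not hold. *)

theory Defs
  imports Main "HOL-Library.List_Lexorder"
begin

datatype (funs_trm: 'f, vars_trm: 'v) trm = Var 'v | Fun 'f "('f,'v) trm list"

type_synonym pos = "nat list"
type_synonym ('f,'v) rule = "('f,'v) trm \<times> ('f,'v) trm"

fun subst :: "('f,'v) trm \<Rightarrow> ('v \<Rightarrow> ('f,'w) trm) \<Rightarrow> ('f,'w) trm" where
  "subst (Var x) \<sigma> = \<sigma> x"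
| "subst (Fun f ts) \<sigma> = Fun f (map (\<lambda>t. subst t \<sigma>) ts)"

fun is_pos :: "('f,'v) trm \<Rightarrow> pos \<Rightarrow> bool" where
  "is_pos t [] = True"
| "is_pos (Var x) (i # p) = False"
| "is_pos (Fun f ts) (i # p) = (i < length ts \<and> is_pos (ts ! i) p)"

definition poss :: "('f,'v) trm \<Rightarrow> pos set" where
  "poss t = {p. is_pos t p}"

fun subt_at :: "('f,'v) trm \<Rightarrow> pos \<Rightarrow> ('f,'v) trm" where
  "subt_at t [] = t"
| "subt_at (Fun f ts) (i # p) = subt_at (ts ! i) p"
| "subt_at (Var x) (i # p) = Var x"

fun replace_at :: "('f,'v) trm \<Rightarrow> pos \<Rightarrow> ('f,'v) trm \<Rightarrow> ('f,'v) trm" where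
  "replace_at t [] s = s"
| "replace_at (Fun f ts) (i # p) s = Fun f (ts[i := replace_at (ts ! i) p s])"
| "replace_at (Var x) (i # p) s = Var x"

definition fun_poss :: "('f,'v) trm \<Rightarrow> pos set" where
  "fun_poss t = {p \<in> poss t. \<not> (\<exists>x. subt_at t p = Var x)}"

definition parallel_set :: "pos set \<Rightarrow> bool" where
  "parallel_set P = (\<forall>p\<in>P. \<forall>q\<in>P. p \<noteq> q \<longrightarrow> \<not> (\<exists>r. q = p @ r))"

text \<open>Simultaneous replacement at a finite set of pairwise parallel positions
  (the order of the individual replacements is irrelevant for parallel positions).\<close>
definition par_replace :: "('f,'v) trm \<Rightarrow> pos set \<Rightarrow> (pos \<Rightarrow> ('f,'v) trm) \<Rightarrow> ('f,'v) trm" where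
  "par_replace t P g = fold (\<lambda>p u. replace_at u p (g p)) (sorted_list_of_set P) t"

definition vars_rule :: "('f,'v) rule \<Rightarrow> 'v set" where
  "vars_rule \<rho> = vars_trm (fst \<rho>) \<union> vars_trm (snd \<rho>)"

definition trs :: "('f,'v) rule set \<Rightarrow> bool" where
  "trs R = (\<forall>(l, r) \<in> R. (\<nexists>x. l = Var x) \<and> vars_trm r \<subseteq> vars_trm l)"

fun linear_trm :: "('f,'v) trm \<Rightarrow> bool" where
  "linear_trm (Var x) = True"
| "linear_trm (Fun f ts) = ((\<forall>t \<in> set ts. linear_trm t) \<and>
     (\<forall>i < length ts. \<forall>j < length ts. i \<noteq> j \<longrightarrow> vars_trm (ts ! i) \<inter> vars_trm (ts ! j) = {}))"

definition left_linear :: "('f,'v) rule set \<Rightarrow> bool" where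
  "left_linear R = (\<forall>(l, r) \<in> R. linear_trm l)"

definition rstep :: "('f,'v) rule set \<Rightarrow> ('f,'v) trm rel" where
  "rstep R = {(s, t). \<exists>l r \<sigma> p. (l, r) \<in> R \<and> p \<in> poss s \<and> subt_at s p = subst l \<sigma>
                  \<and> t = replace_at s p (subst r \<sigma>)}"

definition CR :: "'a rel \<Rightarrow> bool" where
  "CR r = ((r\<inverse>)\<^sup>* O r\<^sup>* \<subseteq> r\<^sup>* O (r\<inverse>)\<^sup>*)"

definition joinable :: "'a rel \<Rightarrow> 'a rel" where
  "joinable r = r\<^sup>* O (r\<inverse>)\<^sup>*"

definition conv :: "'a rel \<Rightarrow> 'a rel" where
  "conv r = (r \<union> r\<inverse>)\<^sup>*"

definition SN_rel :: "'a rel \<Rightarrow> 'a rel \<Rightarrow> bool" where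
  "SN_rel P R = (\<nexists>f. \<forall>i. (f i, f (Suc i)) \<in> R\<^sup>* O P O R\<^sup>*)"

definition variant :: "('f,'v) rule \<Rightarrow> ('f,'v) rule \<Rightarrow> bool" where
  "variant \<rho>' \<rho> = (\<exists>\<pi>. bij \<pi> \<and> \<rho>' = (subst (fst \<rho>) (Var \<circ> \<pi>), subst (snd \<rho>) (Var \<circ> \<pi>)))"

definition variant_of :: "('f,'v) rule \<Rightarrow> ('f,'v) rule set \<Rightarrow> bool" where
  "variant_of \<rho>' R = (\<exists>\<rho>\<in>R. variant \<rho>' \<rho>)"

definition unifier :: "('v \<Rightarrow> ('f,'v) trm) \<Rightarrow> ('f,'v) rule set \<Rightarrow> bool" where
  "unifier \<sigma> E = (\<forall>(a, b) \<in> E. subst a \<sigma> = subst b \<sigma>)"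

definition mgu :: "('v \<Rightarrow> ('f,'v) trm) \<Rightarrow> ('f,'v) rule set \<Rightarrow> bool" where
  "mgu \<sigma> E = (unifier \<sigma> E \<and> (\<forall>\<tau>. unifier \<tau> E \<longrightarrow> (\<exists>\<delta>. \<forall>x. \<tau> x = subst (\<sigma> x) \<delta>)))"

definition pcpeaks :: "('f,'v) rule set \<Rightarrow> (('f,'v) trm \<times> ('f,'v) trm \<times> ('f,'v) trm) set" where
  "pcpeaks R = {(t, s, u). \<exists>l r (rl :: pos \<Rightarrow> ('f,'v) rule) P \<sigma>.
      variant_of (l, r) R \<and>
      P \<noteq> {} \<and> P \<subseteq> fun_poss l \<and> parallel_set P \<and>
      (\<forall>p\<in>P. variant_of (rl p) R) \<and>
      (\<forall>p\<in>P. vars_rule (l, r) \<inter> vars_rule (rl p) = {}) \<and>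
      (\<forall>p\<in>P. \<forall>q\<in>P. p \<noteq> q \<longrightarrow> vars_rule (rl p) \<inter> vars_rule (rl q) = {}) \<and>
      mgu \<sigma> {(fst (rl p), subt_at l p) | p. p \<in> P} \<and>
      (P = {[]} \<longrightarrow> \<not> variant (rl []) (l, r)) \<and>
      s = subst l \<sigma> \<and>
      t = par_replace (subst l \<sigma>) P (\<lambda>p. subst (snd (rl p)) \<sigma>) \<and>
      u = subst r \<sigma>}"

definition PCPS :: "('f,'v) rule set \<Rightarrow> ('f,'v) rule set \<Rightarrow> ('f,'v) rule set" where
  "PCPS R C = {(s, t) | s t u. (t, s, u) \<in> pcpeaks R \<and> (t, u) \<notin> conv (rstep C)}
            \<union> {(s, u) | s t u. (t, s, u) \<in> pcpeaks R \<and> (t, u) \<notin> conv (rstep C)}"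

end

theory Submission
  imports Defs
begin


lemma subst_subst: "subst (subst t \<sigma>) \<tau> = subst t (\<lambda>x. subst (\<sigma> x) \<tau>)"
  by (induction t) auto

lemma subst_cong: "(\<And>x. x \<in> vars_trm t \<Longrightarrow> \<sigma> x = \<tau> x) \<Longrightarrow> subst t \<sigma> = subst t \<tau>"
  by (induction t) auto

lemma subst_Var[simp]: "subst t Var = t"
  by (induction t) (auto simp: map_idI)

lemma vars_subst: "vars_trm (subst t \<sigma>) = (\<Union>x\<in>vars_trm t. vars_trm (\<sigma> x))"
  by (induction t) auto

lemma subst_eq_vars: "subst t \<sigma> = subst t \<tau> \<Longrightarrow> x \<in> vars_trm t \<Longrightarrow> \<sigma> x = \<tau> x"
  by (induction t) (auto simp: map_eq_conv)

lemma is_pos_subst: "is_pos t p \<Longrightarrow> is_pos (subst t \<sigma>) p"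
  by (induction t p rule: is_pos.induct) auto

lemma subt_at_subst: "is_pos t p \<Longrightarrow> subt_at (subst t \<sigma>) p = subst (subt_at t p) \<sigma>"
  by (induction t p rule: is_pos.induct) auto

inductive_set rs :: "('f,'v) rule set \<Rightarrow> ('f,'v) trm rel" for R where
  rs_root: "(l,r) \<in> R \<Longrightarrow> (subst l \<sigma>, subst r \<sigma>) \<in> rs R"
| rs_ctxt: "(s,t) \<in> rs R \<Longrightarrow> i < length ts \<Longrightarrow> (Fun f (ts[i:=s]), Fun f (ts[i:=t])) \<in> rs R"

lemma rstep_rs: "rstep R = rs R"
proof
  show "rstep R \<subseteq> rs R"
  proof
    fix x assume "x \<in> rstep R"
    then obtain s t l r \<sigma> p where x: "x = (s,t)" and lr: "(l,r) \<in> R" and p: "p \<in> poss s"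
      and st: "subt_at s p = subst l \<sigma>" "t = replace_at s p (subst r \<sigma>)"
      unfolding rstep_def by blast
    have "is_pos s p" using p by (simp add: poss_def)
    then have "(s, replace_at s p (subst r \<sigma>)) \<in> rs R" using st(1)
    proof (induction s p rule: is_pos.induct)
      case (1 t) then show ?case using rs_root[OF lr] by simp
    next
      case (2 x i p) then show ?case by simp
    next
      case (3 f ts i p)
      then have "(ts ! i, replace_at (ts!i) p (subst r \<sigma>)) \<in> rs R" by simp
      from rs_ctxt[OF this, of i ts f] 3 show ?case by simp
    qed
    then show "x \<in> rs R" using x st by simp
  qed
next
  show "rs R \<subseteq> rstep R"
  proof
    fix x assume "x \<in> rs R"
    then obtain s t where x: "x = (s,t)" and st0: "(s,t) \<in> rs R" by (cases x) auto
    from st0 have "(s,t) \<in> rstep R"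
    proof (induction rule: rs.induct)
      case (rs_root l r \<sigma>)
      then show ?case unfolding rstep_def poss_def
        apply simp
        apply (rule exI[of _ l], rule exI[of _ r])
        apply (rule conjI, assumption)
        apply (rule exI[of _ \<sigma>], rule exI[of _ "[]"])
        by simp
    next
      case (rs_ctxt s t i ts f)
      then obtain l r \<sigma> p where lr: "(l,r) \<in> R" and p: "p \<in> poss s"
        and st: "subt_at s p = subst l \<sigma>" "t = replace_at s p (subst r \<sigma>)"
        unfolding rstep_def by blast
      show ?case unfolding rstep_def
        apply (simp, rule exI[of _ l], rule exI[of _ r], simp add: lr, rule exI[of _ \<sigma>], rule exI[of _ "i#p"])
        using p st rs_ctxt by (auto simp: poss_def)
    qed
    then show "x \<in> rstep R" using x by simp
  qed
qed

lemma rs_subst: "(s,t) \<in> rs R \<Longrightarrow> (subst s \<tau>, subst t \<tau>) \<in> rs R"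
proof (induction rule: rs.induct)
  case (rs_root l r \<sigma>)
  then show ?case using rs.rs_root[OF rs_root, of "\<lambda>x. subst (\<sigma> x) \<tau>"] by (simp add: subst_subst)
next
  case (rs_ctxt s t i ts f)
  have "i < length (map (\<lambda>t. subst t \<tau>) ts)" using rs_ctxt by simp
  from rs.rs_ctxt[OF rs_ctxt.IH this, of f] show ?case
    by (simp add: map_update)
qed

lemma rs_mono_aux: "(s,t) \<in> rs R \<Longrightarrow> R \<subseteq> R' \<Longrightarrow> (s,t) \<in> rs R'"
  by (induction rule: rs.induct) (auto intro: rs.intros)

lemma rs_mono: "R \<subseteq> R' \<Longrightarrow> rs R \<subseteq> rs R'"
  using rs_mono_aux by auto

lemma joinable_iff: "(a,b) \<in> joinable r \<longleftrightarrow> (\<exists>v. (a,v) \<in> r\<^sup>* \<and> (b,v) \<in> r\<^sup>*)"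
  unfolding joinable_def rtrancl_converse by auto

lemma rs_ctxt_rtrancl: "(s,t) \<in> (rs R)\<^sup>* \<Longrightarrow> i < length ts \<Longrightarrow> (Fun f (ts[i:=s]), Fun f (ts[i:=t])) \<in> (rs R)\<^sup>*"
proof (induction rule: rtrancl_induct)
  case base then show ?case by simp
next
  case (step y z)
  then have "(Fun f (ts[i:=y]), Fun f (ts[i:=z])) \<in> rs R" by (intro rs_ctxt) auto
  with step show ?case by (meson rtrancl.rtrancl_into_rtrancl)
qed

lemma rs_args_rtrancl:
  assumes "list_all2 (\<lambda>a b. (a,b) \<in> (rs R)\<^sup>*) as bs"
  shows "(Fun f as, Fun f bs) \<in> (rs R)\<^sup>*"
proof -
  have "\<And>ps. (Fun f (ps @ as), Fun f (ps @ bs)) \<in> (rs R)\<^sup>*"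
    using assms
  proof (induction as bs rule: list_all2_induct)
    case Nil then show ?case by simp
  next
    case (Cons a as b bs)
    have "(Fun f ((ps @ a # as)[length ps := a]), Fun f ((ps @ a # as)[length ps := b])) \<in> (rs R)\<^sup>*"
      using Cons(1) by (intro rs_ctxt_rtrancl) auto
    then have 1: "(Fun f (ps @ a # as), Fun f (ps @ b # as)) \<in> (rs R)\<^sup>*" by simp
    have "(Fun f ((ps @ [b]) @ as), Fun f ((ps @ [b]) @ bs)) \<in> (rs R)\<^sup>*" by (rule Cons(3))
    with 1 show ?case by (simp add: rtrancl_trans)
  qed
  from this[of "[]"] show ?thesis by simp
qed

lemma rs_ctxt_joinable: "(s,t) \<in> joinable (rs R) \<Longrightarrow> i < length ts \<Longrightarrow> (Fun f (ts[i:=s]), Fun f (ts[i:=t])) \<in> joinable (rs R)"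
proof -
  assume "(s,t) \<in> joinable (rs R)" "i < length ts"
  then obtain v where "(s,v) \<in> (rs R)\<^sup>*" "(t,v) \<in> (rs R)\<^sup>*"
    unfolding joinable_iff by auto
  then have "(Fun f (ts[i:=s]), Fun f (ts[i:=v])) \<in> (rs R)\<^sup>*" "(Fun f (ts[i:=t]), Fun f (ts[i:=v])) \<in> (rs R)\<^sup>*"
    using \<open>i < length ts\<close> by (auto intro: rs_ctxt_rtrancl)
  then show ?thesis unfolding joinable_iff by auto
qed

lemma rs_subst_rtrancl: "(s,t) \<in> (rs R)\<^sup>* \<Longrightarrow> (subst s \<tau>, subst t \<tau>) \<in> (rs R)\<^sup>*"
  by (induction rule: rtrancl_induct) (auto intro: rtrancl_into_rtrancl rs_subst)

lemma rs_subst_joinable: "(s,t) \<in> joinable (rs R) \<Longrightarrow> (subst s \<tau>, subst t \<tau>) \<in> joinable (rs R)"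
  unfolding joinable_iff by (auto intro: rs_subst_rtrancl)

lemma rs_subst_conv: "(s,t) \<in> conv (rs R) \<Longrightarrow> (subst s \<tau>, subst t \<tau>) \<in> conv (rs R)"
  unfolding conv_def
proof (induction rule: rtrancl_induct)
  case base then show ?case by simp
next
  case (step y z)
  then have "(subst y \<tau>, subst z \<tau>) \<in> rs R \<union> (rs R)\<inverse>" by (auto intro: rs_subst)
  with step show ?case by (meson rtrancl.rtrancl_into_rtrancl)
qed

lemma CR_peak: "CR r \<Longrightarrow> (b,m) \<in> r\<^sup>* \<Longrightarrow> (b,c) \<in> r\<^sup>* \<Longrightarrow> \<exists>w. (m,w) \<in> r\<^sup>* \<and> (c,w) \<in> r\<^sup>*"
proof -
  assume cr: "CR r" and bm: "(b,m) \<in> r\<^sup>*" and bc: "(b,c) \<in> r\<^sup>*"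
  have "(m,b) \<in> (r\<inverse>)\<^sup>*" using bm by (simp add: rtrancl_converse)
  from relcompI[OF this bc] have "(m,c) \<in> (r\<inverse>)\<^sup>* O r\<^sup>*" .
  with cr[unfolded CR_def] have "(m,c) \<in> r\<^sup>* O (r\<inverse>)\<^sup>*" by (rule subsetD)
  then obtain w where "(m,w) \<in> r\<^sup>*" "(w,c) \<in> (r\<inverse>)\<^sup>*" by (rule relcompE) simp
  then show ?thesis by (auto simp add: rtrancl_converse)
qed

lemma CR_conv_joinable_aux: "(a,b) \<in> (r \<union> r\<inverse>)\<^sup>* \<Longrightarrow> CR r \<Longrightarrow> (a,b) \<in> joinable r"
proof (induction rule: rtrancl_induct)
  case base then show ?case unfolding joinable_iff by (intro exI[of _ a]) simp
next
  case (step b c)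
  from step(3)[OF step(4)] obtain m where am: "(a,m) \<in> r\<^sup>*" and bm: "(b,m) \<in> r\<^sup>*"
    unfolding joinable_iff by (elim exE conjE)
  show ?case
  proof (cases "(b,c) \<in> r")
    case True
    then have "(b,c) \<in> r\<^sup>*" by (rule r_into_rtrancl)
    from CR_peak[OF step(4) bm this] obtain w where mw: "(m,w) \<in> r\<^sup>*" and cw: "(c,w) \<in> r\<^sup>*" by auto
    have "(a,w) \<in> r\<^sup>*" using am mw by (rule rtrancl_trans)
    then show ?thesis using cw unfolding joinable_iff by (intro exI[of _ w]) simp
  next
    case False
    then have "(c,b) \<in> r" using step(2) by simp
    then have "(c,m) \<in> r\<^sup>*" using bm by (rule converse_rtrancl_into_rtrancl)
    then show ?thesis using am unfolding joinable_iff by (intro exI[of _ m]) simp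
  qed
qed

lemma CR_conv_joinable: "CR r \<Longrightarrow> (a,b) \<in> conv r \<Longrightarrow> (a,b) \<in> joinable r"
  unfolding conv_def by (rule CR_conv_joinable_aux)

inductive par :: "('f,'v) rule set \<Rightarrow> ('f,'v) trm \<Rightarrow> ('f,'v) trm \<Rightarrow> bool" for R where
  par_Var: "par R (Var x) (Var x)"
| par_Fun: "list_all2 (par R) ss ts \<Longrightarrow> par R (Fun f ss) (Fun f ts)"
| par_root: "(l,r) \<in> R \<Longrightarrow> par R (subst l \<sigma>) (subst r \<sigma>)"

lemma par_refl[simp]: "par R t t"
  by (induction t) (auto intro: par_Var par_Fun simp: list_all2_conv_all_nth)

lemma rs_par: "(s,t) \<in> rs R \<Longrightarrow> par R s t"
proof (induction rule: rs.induct)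
  case (rs_root l r \<sigma>) then show ?case by (rule par_root)
next
  case (rs_ctxt s t i ts f)
  then show ?case by (auto intro!: par_Fun simp: list_all2_conv_all_nth nth_list_update)
qed

lemma par_rs: "par R s t \<Longrightarrow> (s,t) \<in> (rs R)\<^sup>*"
proof (induction rule: par.induct)
  case (par_Fun ss ts f)
  then show ?case by (intro rs_args_rtrancl) (auto elim: list_all2_mono)
next
  case (par_root l r \<sigma>)
  then show ?case using rs_root[of l r R \<sigma>] by blast
qed simp

lemma par_subst2: "(\<And>x. par R (\<sigma> x) (\<sigma>' x)) \<Longrightarrow> par R (subst t \<sigma>) (subst t \<sigma>')"
  by (induction t) (auto intro!: par_Fun simp: list_all2_conv_all_nth)

lemma par_mono: "par R s t \<Longrightarrow> R \<subseteq> R' \<Longrightarrow> par R' s t"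
proof (induction rule: par.induct)
  case (par_Fun ss ts f)
  then show ?case by (auto intro!: par.par_Fun elim: list_all2_mono)
next
  case (par_root l r \<sigma>)
  then show ?case using par.par_root[of l r R' \<sigma>] by blast
qed simp



definition dec :: "'a rel \<Rightarrow> 'a rel \<Rightarrow> 'a \<Rightarrow> 'a \<Rightarrow> 'a \<Rightarrow> bool" where
  "dec r p x t u = (\<exists>x1 x2. (x,x1) \<in> p \<and> (x,x2) \<in> p \<and> (x1,t) \<in> r\<^sup>* \<and> (x2,u) \<in> r\<^sup>* \<and> (x1,x2) \<in> joinable r)"

lemma dec_sym: "dec r p x t u \<Longrightarrow> dec r p x u t"
  unfolding dec_def joinable_iff by blast

locale absCR =
  fixes r S c p :: "'a rel"
  assumes r_S: "r \<subseteq> S" and S_r: "S \<subseteq> r\<^sup>*" and S_refl: "(x,x) \<in> S"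
    and c_r: "c \<subseteq> r" and c_CR: "CR c"
    and SN: "SN_rel p r"
    and peakC: "\<And>x t u. (x,t) \<in> c \<Longrightarrow> (x,u) \<in> S \<Longrightarrow> (\<exists>v. (t,v) \<in> S O c\<^sup>* \<and> (u,v) \<in> c\<^sup>*) \<or> dec r p x t u"
    and peakS: "\<And>x t u. (x,t) \<in> S \<Longrightarrow> (x,u) \<in> S \<Longrightarrow> (\<exists>v. (t,v) \<in> S O c\<^sup>* \<and> (u,v) \<in> S O c\<^sup>*) \<or> dec r p x t u"
begin

definition Q where "Q = r\<^sup>* O p O r\<^sup>*"
definition gt where "gt = Q\<^sup>+"

lemma wf_gt: "wf (gt\<inverse>)"
proof -
  have "wf (Q\<inverse>)"
    unfolding wf_iff_no_infinite_down_chain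
    using SN unfolding SN_rel_def Q_def by auto
  then have "wf ((Q\<inverse>)\<^sup>+)" by (rule wf_trancl)
  then show ?thesis unfolding gt_def by (simp add: trancl_converse)
qed

lemma Q_rtrancl: "(a,b) \<in> Q \<Longrightarrow> (b,e) \<in> r\<^sup>* \<Longrightarrow> (a,e) \<in> Q"
  unfolding Q_def by (auto intro: rtrancl_trans)

lemma gt_rtrancl: "(a,b) \<in> gt \<Longrightarrow> (b,e) \<in> r\<^sup>* \<Longrightarrow> (a,e) \<in> gt"
  unfolding gt_def
proof (induction rule: trancl_induct)
  case (base y)
  then show ?case using Q_rtrancl by blast
next
  case (step y z)
  then have "(y,e) \<in> Q" using Q_rtrancl by blast
  with step(1) show ?case by (rule trancl_into_trancl)
qed

definition Good where "Good y = (\<forall>t u. (y,t) \<in> r\<^sup>* \<longrightarrow> (y,u) \<in> r\<^sup>* \<longrightarrow> (t,u) \<in> joinable r)"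

context
  fixes s
  assumes IH: "\<And>y. (s,y) \<in> gt \<Longrightarrow> Good y"
begin

definition Low where "Low y = ((s,y) \<in> gt)"
definition T where "T y = ((s,y) \<in> r\<^sup>*)"
definition A where "A = c \<union> {(y,z). (y,z) \<in> r \<and> Low y}"

lemma low_closed: "Low y \<Longrightarrow> (y,z) \<in> r\<^sup>* \<Longrightarrow> Low z"
  unfolding Low_def using gt_rtrancl by blast

lemma T_closed: "T y \<Longrightarrow> (y,z) \<in> r\<^sup>* \<Longrightarrow> T z"
  unfolding T_def by (rule rtrancl_trans)

lemma low_of_p: "T x \<Longrightarrow> (x,x1) \<in> p \<Longrightarrow> Low x1"
proof -
  assume "T x" "(x,x1) \<in> p"
  then have "(s,x1) \<in> Q" unfolding Q_def T_def by auto
  then show ?thesis unfolding Low_def gt_def by (rule r_into_trancl)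
qed

lemma A_r: "A \<subseteq> r" unfolding A_def using c_r by auto

lemma A_rtrancl_r: "(a,b) \<in> A\<^sup>* \<Longrightarrow> (a,b) \<in> r\<^sup>*"
  using rtrancl_mono[OF A_r] by blast

lemma c_rtrancl_A: "(a,b) \<in> c\<^sup>* \<Longrightarrow> (a,b) \<in> A\<^sup>*"
  using rtrancl_mono[of c A] unfolding A_def by blast

lemma c_rtrancl_r: "(a,b) \<in> c\<^sup>* \<Longrightarrow> (a,b) \<in> r\<^sup>*"
  using rtrancl_mono[OF c_r] by blast

lemma low_rtrancl_A: "(y,z) \<in> r\<^sup>* \<Longrightarrow> Low y \<Longrightarrow> (y,z) \<in> A\<^sup>*"
proof (induction rule: rtrancl_induct)
  case base then show ?case by simp
next
  case (step z z')
  then have "Low z" using low_closed by blast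
  with step have "(z,z') \<in> A" unfolding A_def by auto
  with step show ?case by (meson rtrancl.rtrancl_into_rtrancl)
qed

lemma join_low: "Low y \<Longrightarrow> (y,a) \<in> r\<^sup>* \<Longrightarrow> (y,b) \<in> r\<^sup>* \<Longrightarrow> \<exists>v. (a,v) \<in> A\<^sup>* \<and> (b,v) \<in> A\<^sup>*"
proof -
  assume ly: "Low y" and ya: "(y,a) \<in> r\<^sup>*" and yb: "(y,b) \<in> r\<^sup>*"
  have "Good y" using IH ly unfolding Low_def by blast
  then have "(a,b) \<in> joinable r" using ya yb unfolding Good_def by blast
  then obtain v where av: "(a,v) \<in> r\<^sup>*" and bv: "(b,v) \<in> r\<^sup>*" unfolding joinable_iff by blast
  have la: "Low a" using low_closed[OF ly ya] .
  have lb: "Low b" using low_closed[OF ly yb] .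
  show ?thesis using low_rtrancl_A[OF av la] low_rtrancl_A[OF bv lb] by blast
qed

lemma A_shape: "(y,t) \<in> A\<^sup>* \<Longrightarrow> (y,t) \<in> c\<^sup>* \<or> (\<exists>a. (y,a) \<in> c\<^sup>* \<and> Low a \<and> (a,t) \<in> r\<^sup>*)"
proof (induction rule: rtrancl_induct)
  case base then show ?case by simp
next
  case (step t t')
  show ?case
  proof (cases "(y,t) \<in> c\<^sup>*")
    case True
    show ?thesis
    proof (cases "(t,t') \<in> c")
      case True
      then show ?thesis using \<open>(y,t) \<in> c\<^sup>*\<close> by (meson rtrancl.rtrancl_into_rtrancl)
    next
      case False
      then have "(t,t') \<in> r" "Low t" using step(2) unfolding A_def by auto
      then show ?thesis using \<open>(y,t) \<in> c\<^sup>*\<close> by blast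
    qed
  next
    case False
    then obtain a where "(y,a) \<in> c\<^sup>*" "Low a" "(a,t) \<in> r\<^sup>*" using step(3) by blast
    moreover have "(t,t') \<in> r" using step(2) A_r by blast
    ultimately show ?thesis by (meson rtrancl.rtrancl_into_rtrancl)
  qed
qed

lemma A_confl_aux:
  assumes ya: "(y,a) \<in> c\<^sup>*" and la: "Low a" and at: "(a,t) \<in> r\<^sup>*" and yu: "(y,u) \<in> c\<^sup>*"
  shows "\<exists>v. (t,v) \<in> A\<^sup>* \<and> (u,v) \<in> A\<^sup>*"
proof -
  obtain w where aw: "(a,w) \<in> c\<^sup>*" and uw: "(u,w) \<in> c\<^sup>*" using CR_peak[OF c_CR ya yu] by blast
  obtain v where tv: "(t,v) \<in> A\<^sup>*" and wv: "(w,v) \<in> A\<^sup>*" using join_low[OF la at c_rtrancl_r[OF aw]] by blast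
  have "(u,v) \<in> A\<^sup>*" using c_rtrancl_A[OF uw] wv by (rule rtrancl_trans)
  with tv show ?thesis by blast
qed

lemma A_confl: "(y,t) \<in> A\<^sup>* \<Longrightarrow> (y,u) \<in> A\<^sup>* \<Longrightarrow> \<exists>v. (t,v) \<in> A\<^sup>* \<and> (u,v) \<in> A\<^sup>*"
proof -
  assume yt: "(y,t) \<in> A\<^sup>*" and yu: "(y,u) \<in> A\<^sup>*"
  show ?thesis
  proof (cases "(y,t) \<in> c\<^sup>*")
    case yt': True
    show ?thesis
    proof (cases "(y,u) \<in> c\<^sup>*")
      case True
      then obtain w where "(t,w) \<in> c\<^sup>*" "(u,w) \<in> c\<^sup>*" using CR_peak[OF c_CR yt' True] by blast
      then show ?thesis using c_rtrancl_A by blast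
    next
      case False
      then obtain a where "(y,a) \<in> c\<^sup>*" "Low a" "(a,u) \<in> r\<^sup>*" using A_shape[OF yu] by blast
      from A_confl_aux[OF this yt'] show ?thesis by blast
    qed
  next
    case False
    then obtain a where ya: "(y,a) \<in> c\<^sup>*" and la: "Low a" and at: "(a,t) \<in> r\<^sup>*" using A_shape[OF yt] by blast
    show ?thesis
    proof (cases "(y,u) \<in> c\<^sup>*")
      case True
      from A_confl_aux[OF ya la at True] show ?thesis by blast
    next
      case False
      then obtain b where yb: "(y,b) \<in> c\<^sup>*" and lb: "Low b" and bu: "(b,u) \<in> r\<^sup>*" using A_shape[OF yu] by blast
      obtain w where aw: "(a,w) \<in> c\<^sup>*" and bw: "(b,w) \<in> c\<^sup>*" using CR_peak[OF c_CR ya yb] by blast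
      obtain v1 where tv1: "(t,v1) \<in> A\<^sup>*" and wv1: "(w,v1) \<in> A\<^sup>*" using join_low[OF la at c_rtrancl_r[OF aw]] by blast
      obtain v2 where uv2: "(u,v2) \<in> A\<^sup>*" and wv2: "(w,v2) \<in> A\<^sup>*" using join_low[OF lb bu c_rtrancl_r[OF bw]] by blast
      have lw: "Low w" using low_closed[OF la c_rtrancl_r[OF aw]] .
      obtain v where "(v1,v) \<in> A\<^sup>*" "(v2,v) \<in> A\<^sup>*" using join_low[OF lw A_rtrancl_r[OF wv1] A_rtrancl_r[OF wv2]] by blast
      then show ?thesis using tv1 uv2 by (meson rtrancl_trans)
    qed
  qed
qed

lemma dec_join: "T x \<Longrightarrow> dec r p x t u \<Longrightarrow> \<exists>v. (t,v) \<in> A\<^sup>* \<and> (u,v) \<in> A\<^sup>*"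
proof -
  assume tx: "T x" and "dec r p x t u"
  then obtain x1 x2 where p1: "(x,x1) \<in> p" and p2: "(x,x2) \<in> p" and x1t: "(x1,t) \<in> r\<^sup>*"
    and x2u: "(x2,u) \<in> r\<^sup>*" and j: "(x1,x2) \<in> joinable r" unfolding dec_def by blast
  have l1: "Low x1" using low_of_p[OF tx p1] .
  have l2: "Low x2" using low_of_p[OF tx p2] .
  obtain m where x1m: "(x1,m) \<in> r\<^sup>*" and x2m: "(x2,m) \<in> r\<^sup>*" using j unfolding joinable_iff by blast
  obtain a where ta: "(t,a) \<in> A\<^sup>*" and ma: "(m,a) \<in> A\<^sup>*" using join_low[OF l1 x1t x1m] by blast
  obtain b where mb: "(m,b) \<in> A\<^sup>*" and ub: "(u,b) \<in> A\<^sup>*" using join_low[OF l2 x2m x2u] by blast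
  have lm: "Low m" using low_closed[OF l1 x1m] .
  obtain v where "(a,v) \<in> A\<^sup>*" "(b,v) \<in> A\<^sup>*" using join_low[OF lm A_rtrancl_r[OF ma] A_rtrancl_r[OF mb]] by blast
  then show ?thesis using ta ub by (meson rtrancl_trans)
qed

lemma SOc_SOA: "(a,b) \<in> S O c\<^sup>* \<Longrightarrow> (a,b) \<in> S O A\<^sup>*"
  using c_rtrancl_A by blast

lemma S_SOA: "(a,b) \<in> S \<Longrightarrow> (a,b) \<in> S O A\<^sup>*"
  by blast

lemma lemma2: "T y \<Longrightarrow> (y,z) \<in> A \<Longrightarrow> (y,w) \<in> S \<Longrightarrow> \<exists>v. (z,v) \<in> S O A\<^sup>* \<and> (w,v) \<in> A\<^sup>*"
proof -
  assume ty: "T y" and yz: "(y,z) \<in> A" and yw: "(y,w) \<in> S"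
  show ?thesis
  proof (cases "Low y")
    case True
    have "(y,z) \<in> r\<^sup>*" using yz A_r by blast
    moreover have "(y,w) \<in> r\<^sup>*" using yw S_r by blast
    ultimately obtain v where "(z,v) \<in> A\<^sup>*" "(w,v) \<in> A\<^sup>*" using join_low[OF True] by blast
    moreover have "(z,z) \<in> S" by (rule S_refl)
    ultimately show ?thesis by blast
  next
    case False
    then have "(y,z) \<in> c" using yz unfolding A_def by auto
    from peakC[OF this yw] show ?thesis
    proof
      assume "\<exists>v. (z, v) \<in> S O c\<^sup>* \<and> (w, v) \<in> c\<^sup>*"
      then show ?thesis using SOc_SOA c_rtrancl_A by blast
    next
      assume "dec r p y z w"
      from dec_join[OF ty this] obtain v where "(z,v) \<in> A\<^sup>*" "(w,v) \<in> A\<^sup>*" by blast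
      moreover have "(z,z) \<in> S" by (rule S_refl)
      ultimately show ?thesis by blast
    qed
  qed
qed

lemma lemma2s: "(y,z) \<in> A\<^sup>* \<Longrightarrow> T y \<Longrightarrow> (y,w) \<in> S \<Longrightarrow> \<exists>v. (z,v) \<in> S O A\<^sup>* \<and> (w,v) \<in> A\<^sup>*"
proof (induction rule: rtrancl_induct)
  case base
  then show ?case by blast
next
  case (step z z')
  then obtain v c0 where zc: "(z,c0) \<in> S" and cv: "(c0,v) \<in> A\<^sup>*" and wv: "(w,v) \<in> A\<^sup>*" by blast
  have tz: "T z" using T_closed[OF step(4) A_rtrancl_r[OF step(1)]] .
  obtain e d where zd: "(z',d) \<in> S" and de: "(d,e) \<in> A\<^sup>*" and ce: "(c0,e) \<in> A\<^sup>*"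
    using lemma2[OF tz step(2) zc] by blast
  obtain v' where ev: "(e,v') \<in> A\<^sup>*" and vv: "(v,v') \<in> A\<^sup>*" using A_confl[OF ce cv] by blast
  have "(d,v') \<in> A\<^sup>*" using de ev by (rule rtrancl_trans)
  with zd have "(z',v') \<in> S O A\<^sup>*" by blast
  moreover have "(w,v') \<in> A\<^sup>*" using wv vv by (rule rtrancl_trans)
  ultimately show ?case by blast
qed

lemma lemma3: "T y \<Longrightarrow> (y,z) \<in> S \<Longrightarrow> (y,w) \<in> S \<Longrightarrow> \<exists>v. (z,v) \<in> S O A\<^sup>* \<and> (w,v) \<in> S O A\<^sup>*"
proof -
  assume ty: "T y" and yz: "(y,z) \<in> S" and yw: "(y,w) \<in> S"
  have zz: "(z,z) \<in> S" and ww: "(w,w) \<in> S" by (rule S_refl)+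
  show ?thesis
  proof (cases "Low y")
    case True
    have "(y,z) \<in> r\<^sup>*" using yz S_r by blast
    moreover have "(y,w) \<in> r\<^sup>*" using yw S_r by blast
    ultimately obtain v where "(z,v) \<in> A\<^sup>*" "(w,v) \<in> A\<^sup>*" using join_low[OF True] by blast
    then show ?thesis using zz ww by blast
  next
    case False
    from peakS[OF yz yw] show ?thesis
    proof
      assume "\<exists>v. (z, v) \<in> S O c\<^sup>* \<and> (w, v) \<in> S O c\<^sup>*"
      then show ?thesis using SOc_SOA by blast
    next
      assume "dec r p y z w"
      from dec_join[OF ty this] obtain v where "(z,v) \<in> A\<^sup>*" "(w,v) \<in> A\<^sup>*" by blast
      then show ?thesis using zz ww by blast
    qed
  qed
qed

definition X where "X = A\<^sup>* O S O A\<^sup>*"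

lemma X_r: "(a,b) \<in> X \<Longrightarrow> (a,b) \<in> r\<^sup>*"
proof -
  assume "(a,b) \<in> X"
  then obtain c1 c2 where "(a,c1) \<in> A\<^sup>*" "(c1,c2) \<in> S" "(c2,b) \<in> A\<^sup>*" unfolding X_def by blast
  then have "(a,c1) \<in> r\<^sup>*" "(c1,c2) \<in> r\<^sup>*" "(c2,b) \<in> r\<^sup>*" using A_rtrancl_r S_r by blast+
  then show ?thesis by (meson rtrancl_trans)
qed

lemma X_rt: "(a,b) \<in> X\<^sup>* \<Longrightarrow> (a,b) \<in> r\<^sup>*"
proof -
  assume ab: "(a,b) \<in> X\<^sup>*"
  have "X \<subseteq> r\<^sup>*" using X_r by auto
  from rtrancl_subset_rtrancl[OF this] ab show ?thesis by (rule subsetD)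
qed

lemma r_X: "r \<subseteq> X"
proof
  fix x assume "x \<in> r"
  then obtain a b where x: "x = (a,b)" and "(a,b) \<in> S" using r_S by (cases x) auto
  have bb: "(b,b) \<in> A\<^sup>*" by simp
  have aa: "(a,a) \<in> A\<^sup>*" by simp
  have "(a,b) \<in> A\<^sup>* O S" using aa \<open>(a,b) \<in> S\<close> by (rule relcompI)
  from relcompI[OF this bb] show "x \<in> X" unfolding X_def using x by (simp add: O_assoc)
qed

lemma push_half:
  assumes tz1: "T z1" and z1t: "(z1,t) \<in> A\<^sup>*" and z1n1: "(z1,n1) \<in> A\<^sup>*"
    and m1: "T m1" and m1n1: "(m1,n1) \<in> A\<^sup>*" and m1p1: "(m1,p1) \<in> S" and p1q: "(p1,q) \<in> A\<^sup>*"
  shows "\<exists>d. (t,d) \<in> X \<and> (q,d) \<in> A\<^sup>*"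
proof -
  obtain k1 where tk: "(t,k1) \<in> A\<^sup>*" and nk: "(n1,k1) \<in> A\<^sup>*" using A_confl[OF z1t z1n1] by blast
  have tn1: "T n1" using T_closed[OF m1 A_rtrancl_r[OF m1n1]] .
  obtain e1 h1 where n1h1: "(n1,h1) \<in> S" and h1e1: "(h1,e1) \<in> A\<^sup>*" and p1e1: "(p1,e1) \<in> A\<^sup>*"
    using lemma2s[OF m1n1 m1 m1p1] by blast
  obtain f1 g1 where k1g1: "(k1,g1) \<in> S" and g1f1: "(g1,f1) \<in> A\<^sup>*" and h1f1: "(h1,f1) \<in> A\<^sup>*"
    using lemma2s[OF nk tn1 n1h1] by blast
  obtain c1 where e1c1: "(e1,c1) \<in> A\<^sup>*" and qc1: "(q,c1) \<in> A\<^sup>*" using A_confl[OF p1e1 p1q] by blast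
  have h1c1: "(h1,c1) \<in> A\<^sup>*" using h1e1 e1c1 by (rule rtrancl_trans)
  obtain d1 where f1d1: "(f1,d1) \<in> A\<^sup>*" and c1d1: "(c1,d1) \<in> A\<^sup>*" using A_confl[OF h1f1 h1c1] by blast
  have "(g1,d1) \<in> A\<^sup>*" using g1f1 f1d1 by (rule rtrancl_trans)
  then have "(t,d1) \<in> X" using tk k1g1 unfolding X_def by blast
  moreover have "(q,d1) \<in> A\<^sup>*" using qc1 c1d1 by (rule rtrancl_trans)
  ultimately show ?thesis by blast
qed

lemma diamond: "T x \<Longrightarrow> (x,t) \<in> X \<Longrightarrow> (x,u) \<in> X \<Longrightarrow> \<exists>v. (t,v) \<in> X \<and> (u,v) \<in> X"
proof -
  assume tx: "T x" and xt: "(x,t) \<in> X" and xu: "(x,u) \<in> X"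
  obtain y1 z1 where xy1: "(x,y1) \<in> A\<^sup>*" and y1z1: "(y1,z1) \<in> S" and z1t: "(z1,t) \<in> A\<^sup>*"
    using xt unfolding X_def by blast
  obtain y2 z2 where xy2: "(x,y2) \<in> A\<^sup>*" and y2z2: "(y2,z2) \<in> S" and z2u: "(z2,u) \<in> A\<^sup>*"
    using xu unfolding X_def by blast
  obtain m where y1m: "(y1,m) \<in> A\<^sup>*" and y2m: "(y2,m) \<in> A\<^sup>*" using A_confl[OF xy1 xy2] by blast
  have ty1: "T y1" using T_closed[OF tx A_rtrancl_r[OF xy1]] .
  have ty2: "T y2" using T_closed[OF tx A_rtrancl_r[OF xy2]] .
  have tm: "T m" using T_closed[OF ty1 A_rtrancl_r[OF y1m]] .
  obtain m1 n1 where mm1: "(m,m1) \<in> S" and m1n1: "(m1,n1) \<in> A\<^sup>*" and z1n1: "(z1,n1) \<in> A\<^sup>*"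
    using lemma2s[OF y1m ty1 y1z1] by blast
  obtain m2 n2 where mm2: "(m,m2) \<in> S" and m2n2: "(m2,n2) \<in> A\<^sup>*" and z2n2: "(z2,n2) \<in> A\<^sup>*"
    using lemma2s[OF y2m ty2 y2z2] by blast
  obtain q p1 p2 where m1p1: "(m1,p1) \<in> S" and p1q: "(p1,q) \<in> A\<^sup>*" and m2p2: "(m2,p2) \<in> S" and p2q: "(p2,q) \<in> A\<^sup>*"
    using lemma3[OF tm mm1 mm2] by blast
  have tm1: "T m1" using T_closed[OF tm] S_r mm1 by blast
  have tm2: "T m2" using T_closed[OF tm] S_r mm2 by blast
  have tz1: "T z1" using T_closed[OF ty1] S_r y1z1 by blast
  have tz2: "T z2" using T_closed[OF ty2] S_r y2z2 by blast
  obtain d1 where td1: "(t,d1) \<in> X" and qd1: "(q,d1) \<in> A\<^sup>*"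
    using push_half[OF tz1 z1t z1n1 tm1 m1n1 m1p1 p1q] by blast
  obtain d2 where ud2: "(u,d2) \<in> X" and qd2: "(q,d2) \<in> A\<^sup>*"
    using push_half[OF tz2 z2u z2n2 tm2 m2n2 m2p2 p2q] by blast
  obtain d where d1d: "(d1,d) \<in> A\<^sup>*" and d2d: "(d2,d) \<in> A\<^sup>*" using A_confl[OF qd1 qd2] by blast
  have XA: "\<And>a b e. (a,b) \<in> X \<Longrightarrow> (b,e) \<in> A\<^sup>* \<Longrightarrow> (a,e) \<in> X"
    unfolding X_def by (meson relcomp.simps rtrancl_trans)
  show ?thesis using XA[OF td1 d1d] XA[OF ud2 d2d] by blast
qed

lemma strip: "(x,u) \<in> X\<^sup>* \<Longrightarrow> T x \<Longrightarrow> (x,t) \<in> X \<Longrightarrow> \<exists>v. (t,v) \<in> X\<^sup>* \<and> (u,v) \<in> X"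
proof (induction rule: rtrancl_induct)
  case base then show ?case by blast
next
  case (step u u')
  then obtain v where tv: "(t,v) \<in> X\<^sup>*" and uv: "(u,v) \<in> X" by blast
  have "(x,u) \<in> r\<^sup>*" using step(1) by (rule X_rt)
  then have tu: "T u" using T_closed step(4) by blast
  obtain v2 where "(v,v2) \<in> X" "(u',v2) \<in> X" using diamond[OF tu uv step(2)] by blast
  then show ?case using tv by (meson rtrancl.rtrancl_into_rtrancl)
qed

lemma full: "(x,t) \<in> X\<^sup>* \<Longrightarrow> T x \<Longrightarrow> (x,u) \<in> X\<^sup>* \<Longrightarrow> \<exists>v. (t,v) \<in> X\<^sup>* \<and> (u,v) \<in> X\<^sup>*"
proof (induction rule: rtrancl_induct)
  case base then show ?case by blast
next
  case (step t t')
  then obtain v where tv: "(t,v) \<in> X\<^sup>*" and uv: "(u,v) \<in> X\<^sup>*" by blast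
  have "(x,t) \<in> r\<^sup>*" using step(1) by (rule X_rt)
  then have tt: "T t" using T_closed step(4) by blast
  obtain v' where "(t',v') \<in> X\<^sup>*" "(v,v') \<in> X" using strip[OF tv tt step(2)] by blast
  then show ?case using uv by (meson rtrancl.rtrancl_into_rtrancl)
qed

lemma Good_s: "Good s"
  unfolding Good_def
proof (intro allI impI)
  fix t u assume st: "(s,t) \<in> r\<^sup>*" and su: "(s,u) \<in> r\<^sup>*"
  have "(s,t) \<in> X\<^sup>*" "(s,u) \<in> X\<^sup>*" using st su rtrancl_mono[OF r_X] by blast+
  moreover have "T s" unfolding T_def by simp
  ultimately obtain v where "(t,v) \<in> X\<^sup>*" "(u,v) \<in> X\<^sup>*" using full by blast
  then have "(t,v) \<in> r\<^sup>*" "(u,v) \<in> r\<^sup>*" using X_rt by blast+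
  then show "(t,u) \<in> joinable r" unfolding joinable_iff by blast
qed

end

lemma all_Good: "Good y"
proof (induction y rule: wf_induct[OF wf_gt])
  case (1 y)
  then show ?case using Good_s[of y] by blast
qed

theorem CR: "CR r"
  unfolding CR_def
proof
  fix x assume "x \<in> (r\<inverse>)\<^sup>* O r\<^sup>*"
  then obtain a b z where x: "x = (a,b)" and "(z,a) \<in> r\<^sup>*" "(z,b) \<in> r\<^sup>*"
    by (auto simp: rtrancl_converse)
  then have "(a,b) \<in> joinable r" using all_Good[of z] unfolding Good_def by blast
  then show "x \<in> r\<^sup>* O (r\<inverse>)\<^sup>*" using x unfolding joinable_def by simp
qed

end



definition shift :: "nat \<Rightarrow> pos set \<Rightarrow> pos set" where
  "shift i P = {p. i#p \<in> P}"

function prep :: "('f,'v) trm \<Rightarrow> pos set \<Rightarrow> (pos \<Rightarrow> ('f,'v) trm) \<Rightarrow> ('f,'v) trm" where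
  "prep (Var x) P g = (if [] \<in> P then g [] else Var x)"
| "prep (Fun f ts) P g = (if [] \<in> P then g [] else
     Fun f (map (\<lambda>i. prep (ts!i) (shift i P) (\<lambda>p. g (i#p))) [0..<length ts]))"
  by pat_completeness auto
termination
  by (relation "measure (\<lambda>(t,P,g). size t)")
     (auto, metis less_Suc_eq_le nth_mem size_list_estimation' order_refl)

definition ppar :: "pos \<Rightarrow> pos \<Rightarrow> bool" where
  "ppar p q = ((\<nexists>r. q = p @ r) \<and> (\<nexists>r. p = q @ r))"

lemma ppar_Cons[simp]: "ppar (i#q) (i#p) = ppar q p"
  by (auto simp: ppar_def)

lemma ppar_shift: "\<forall>q\<in>P. ppar q (i#p) \<Longrightarrow> \<forall>q\<in>shift i P. ppar q p"
  by (auto simp: shift_def)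

lemma prep_empty[simp]: "prep t {} g = t"
proof (induction t arbitrary: g)
  case (Fun f ts)
  then show ?case by (auto simp: shift_def intro: nth_equalityI)
qed simp

lemma prep_root: "[] \<in> P \<Longrightarrow> prep t P g = g []"
  by (cases t) auto

lemma shift_insert: "shift i (insert (i#p) P) = insert p (shift i P)"
  by (auto simp: shift_def)

lemma shift_insert_other: "j \<noteq> i \<Longrightarrow> shift j (insert (i#p) P) = shift j P"
  by (auto simp: shift_def)

lemma replace_prep:
  "is_pos t p \<Longrightarrow> p \<notin> P \<Longrightarrow> (\<forall>q\<in>P. ppar q p) \<Longrightarrow>
   replace_at (prep t P g) p (g p) = prep t (insert p P) g"
proof (induction t arbitrary: p P g)
  case (Var x)
  then have "p = []" by (cases p) auto
  with Var have "P = {}" by (auto simp: ppar_def)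
  then show ?case using \<open>p = []\<close> by simp
next
  case (Fun f ts)
  show ?case
  proof (cases p)
    case Nil
    with Fun have "P = {}" by (auto simp: ppar_def)
    then show ?thesis using Nil by simp
  next
    case (Cons i p')
    have ni: "[] \<notin> P" using Fun(4) Cons by (auto simp: ppar_def)
    have il: "i < length ts" and ip: "is_pos (ts!i) p'" using Fun(2) Cons by auto
    have IH: "replace_at (prep (ts!i) (shift i P) (\<lambda>q. g (i#q))) p' (g (i#p')) =
              prep (ts!i) (insert p' (shift i P)) (\<lambda>q. g (i#q))"
      using Fun(1)[of "ts!i" p' "shift i P" "\<lambda>q. g (i#q)"] il ip Fun(3) ppar_shift[OF Fun(4)[unfolded Cons]] Cons
      by (auto simp: shift_def)
    show ?thesis using ni Cons il IH
      by (auto simp: shift_insert shift_insert_other nth_list_update intro!: nth_equalityI)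
  qed
qed

lemma is_pos_prep:
  "is_pos t p \<Longrightarrow> (\<forall>q\<in>P. ppar q p) \<Longrightarrow> is_pos (prep t P g) p"
proof (induction t arbitrary: p P g)
  case (Var x)
  then have "p = []" by (cases p) auto
  then show ?case by simp
next
  case (Fun f ts)
  show ?case
  proof (cases p)
    case Nil then show ?thesis by simp
  next
    case (Cons i p')
    have ni: "[] \<notin> P" using Fun(3) Cons by (auto simp: ppar_def)
    have il: "i < length ts" and ip: "is_pos (ts!i) p'" using Fun(2) Cons by auto
    have "is_pos (prep (ts!i) (shift i P) (\<lambda>q. g (i#q))) p'"
      using Fun(1)[of "ts!i" p' "shift i P"] il ip ppar_shift[OF Fun(3)[unfolded Cons]] by auto
    then show ?thesis using ni Cons il by simp
  qed
qed

lemma fold_prep: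
  "distinct ps \<Longrightarrow> (\<forall>p\<in>set ps. is_pos t p) \<Longrightarrow> (\<forall>p\<in>set ps. \<forall>q\<in>set ps. p \<noteq> q \<longrightarrow> ppar p q) \<Longrightarrow>
   fold (\<lambda>p u. replace_at u p (g p)) ps t = prep t (set ps) g"
proof (induction ps rule: rev_induct)
  case Nil then show ?case by simp
next
  case (snoc x xs)
  have IH: "fold (\<lambda>p u. replace_at u p (g p)) xs t = prep t (set xs) g"
    using snoc by auto
  have "replace_at (prep t (set xs) g) x (g x) = prep t (insert x (set xs)) g"
    using snoc(2,3,4) by (intro replace_prep) auto
  then show ?case using IH by simp
qed

lemma par_replace_prep:
  assumes "finite P" "parallel_set P" "\<forall>p\<in>P. is_pos t p"
  shows "par_replace t P g = prep t P g"
proof -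
  have "fold (\<lambda>p u. replace_at u p (g p)) (sorted_list_of_set P) t = prep t (set (sorted_list_of_set P)) g"
    using assms by (intro fold_prep) (auto simp: parallel_set_def ppar_def)
  then show ?thesis using assms(1) unfolding par_replace_def by simp
qed

lemma subst_prep:
  "(\<forall>p\<in>P. is_pos t p) \<Longrightarrow> subst (prep t P g) \<tau> = prep (subst t \<tau>) P (\<lambda>p. subst (g p) \<tau>)"
proof (induction t arbitrary: P g)
  case (Var x)
  show ?case
  proof (cases "[] \<in> P")
    case True then show ?thesis by (simp add: prep_root)
  next
    case False
    then have "P = {}" using Var by (auto elim: is_pos.elims)
    then show ?thesis by simp
  qed
next
  case (Fun f ts)
  show ?case
  proof (cases "[] \<in> P")
    case True then show ?thesis by (simp add: prep_root)
  next
    case False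
    have "\<And>i. i < length ts \<Longrightarrow> subst (prep (ts!i) (shift i P) (\<lambda>p. g (i#p))) \<tau> =
        prep (subst (ts!i) \<tau>) (shift i P) (\<lambda>p. subst (g (i#p)) \<tau>)"
      using Fun by (intro Fun(1)) (auto simp: shift_def)
    then show ?thesis using False by (auto intro!: nth_equalityI)
  qed
qed

lemma prep_rtrancl:
  "(\<forall>q\<in>Q. is_pos l q) \<Longrightarrow> (\<And>y. (\<sigma> y, \<sigma>' y) \<in> (rs R)\<^sup>*) \<Longrightarrow>
   (prep (subst l \<sigma>) Q G, prep (subst l \<sigma>') Q G) \<in> (rs R)\<^sup>*"
proof (induction l arbitrary: Q G)
  case (Var y)
  show ?case
  proof (cases "[] \<in> Q")
    case True then show ?thesis by (simp add: prep_root)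
  next
    case False
    then have "Q = {}" using Var by (auto elim: is_pos.elims)
    then show ?thesis using Var by simp
  qed
next
  case (Fun f ls)
  show ?case
  proof (cases "[] \<in> Q")
    case True then show ?thesis by (simp add: prep_root)
  next
    case False
    have "\<And>i. i < length ls \<Longrightarrow> (prep (subst (ls!i) \<sigma>) (shift i Q) (\<lambda>p. G (i#p)),
        prep (subst (ls!i) \<sigma>') (shift i Q) (\<lambda>p. G (i#p))) \<in> (rs R)\<^sup>*"
      using Fun by (intro Fun(1)) (auto simp: shift_def)
    then show ?thesis using False by (auto intro!: rs_args_rtrancl simp: list_all2_conv_all_nth)
  qed
qed

lemma fun_poss_is_pos: "q \<in> fun_poss l \<Longrightarrow> is_pos l q"
  by (auto simp: fun_poss_def poss_def)

lemma fun_poss_Fun: "i < length ls \<Longrightarrow> q \<in> fun_poss (ls!i) \<Longrightarrow> i#q \<in> fun_poss (Fun f ls)"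
  by (auto simp: fun_poss_def poss_def)

lemma fun_poss_root: "[] \<in> fun_poss (Fun f ls)"
  by (auto simp: fun_poss_def poss_def)

lemma fun_poss_Var: "fun_poss (Var x) = {}"
  by (auto simp: fun_poss_def poss_def elim: is_pos.elims)



definition dc :: "('f,'v) rule set \<Rightarrow> ('f,'v) trm \<Rightarrow> ('v \<Rightarrow> ('f,'v) trm) \<Rightarrow> ('f,'v) trm \<Rightarrow>
   (pos set \<times> (pos \<Rightarrow> ('f,'v) rule) \<times> (pos \<Rightarrow> 'v \<Rightarrow> ('f,'v) trm) \<times> ('v \<Rightarrow> ('f,'v) trm)) \<Rightarrow> bool" where
  "dc R2 l \<sigma> u X = (case X of (Q, rl, \<rho>, \<sigma>'') \<Rightarrow>
     finite Q \<and> parallel_set Q \<and> Q \<subseteq> fun_poss l \<and>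
     (\<forall>q\<in>Q. rl q \<in> R2 \<and> subt_at (subst l \<sigma>) q = subst (fst (rl q)) (\<rho> q) \<and>
             subt_at (subst l \<sigma>'') q = subst (fst (rl q)) (\<rho> q)) \<and>
     (\<forall>y. par R2 (\<sigma> y) (\<sigma>'' y)) \<and>
     u = prep (subst l \<sigma>'') Q (\<lambda>q. subst (snd (rl q)) (\<rho> q)))"

lemma linear_Fun_disj: "linear_trm (Fun f ls) \<Longrightarrow> i < length ls \<Longrightarrow> j < length ls \<Longrightarrow>
  y \<in> vars_trm (ls!i) \<Longrightarrow> y \<in> vars_trm (ls!j) \<Longrightarrow> i = j"
  by auto

lemma decomp: "linear_trm l \<Longrightarrow> par R2 (subst l \<sigma>) u \<Longrightarrow> \<exists>X. dc R2 l \<sigma> u X"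
proof (induction l arbitrary: u)
  case (Var y)
  let ?X = "({}::pos set, (\<lambda>_. undefined) :: pos \<Rightarrow> ('a,'b) rule, (\<lambda>_. Var) :: pos \<Rightarrow> 'b \<Rightarrow> ('a,'b) trm, \<sigma>(y := u))"
  have "dc R2 (Var y) \<sigma> u ?X"
    using Var by (auto simp: dc_def parallel_set_def fun_poss_Var)
  then show ?case by blast
next
  case (Fun f ls)
  let ?n = "length ls"
  from Fun.prems(2) show ?case
  proof (cases rule: par.cases)
    case (par_Var x)
    then show ?thesis by simp
  next
    case (par_Fun ss us f')
    then have ss: "ss = map (\<lambda>t. subst t \<sigma>) ls" and f': "f' = f" and u: "u = Fun f us"
      and la: "list_all2 (par R2) (map (\<lambda>t. subst t \<sigma>) ls) us" by auto
    have lus: "length us = ?n" using la by (simp add: list_all2_lengthD[symmetric])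
    have "\<forall>i. \<exists>X. i < ?n \<longrightarrow> dc R2 (ls!i) \<sigma> (us!i) X"
    proof (intro allI)
      fix i
      show "\<exists>X. i < ?n \<longrightarrow> dc R2 (ls!i) \<sigma> (us!i) X"
      proof (cases "i < ?n")
        case True
        have p: "par R2 (subst (ls!i) \<sigma>) (us!i)" using la True list_all2_nthD by fastforce
        have lin: "linear_trm (ls!i)" using Fun.prems(1) True by simp
        from Fun.IH[OF nth_mem[OF True] lin p] show ?thesis by blast
      qed simp
    qed
    then obtain F where F: "\<And>i. i < ?n \<Longrightarrow> dc R2 (ls!i) \<sigma> (us!i) (F i)" by metis
    define QF where "QF i = fst (F i)" for i
    define rlF where "rlF i = fst (snd (F i))" for i
    define \<rho>F where "\<rho>F i = fst (snd (snd (F i)))" for i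
    define \<sigma>F where "\<sigma>F i = snd (snd (snd (F i)))" for i
    have F': "\<And>i. i < ?n \<Longrightarrow> dc R2 (ls!i) \<sigma> (us!i) (QF i, rlF i, \<rho>F i, \<sigma>F i)"
      using F unfolding QF_def rlF_def \<rho>F_def \<sigma>F_def by simp
    define Q where "Q = (\<Union>i\<in>{..<?n}. (\<lambda>q. i#q) ` QF i)"
    define rl where "rl p = rlF (hd p) (tl p)" for p
    define \<rho> where "\<rho> p = \<rho>F (hd p) (tl p)" for p
    define \<sigma>'' where "\<sigma>'' y = (if \<exists>i<?n. y \<in> vars_trm (ls!i) then \<sigma>F (SOME i. i < ?n \<and> y \<in> vars_trm (ls!i)) y else \<sigma> y)" for y
    have \<sigma>''i: "\<sigma>'' y = \<sigma>F i y" if "i < ?n" "y \<in> vars_trm (ls!i)" for i y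
    proof -
      have ex: "\<exists>i<?n. y \<in> vars_trm (ls!i)" using that by blast
      let ?j = "SOME i. i < ?n \<and> y \<in> vars_trm (ls!i)"
      have "?j < ?n \<and> y \<in> vars_trm (ls!?j)" using someI_ex[OF ex] by simp
      then have "?j = i" using linear_Fun_disj[OF Fun.prems(1)] that by blast
      then show ?thesis unfolding \<sigma>''_def using ex by simp
    qed
    have subst_i: "subst (ls!i) \<sigma>'' = subst (ls!i) (\<sigma>F i)" if "i < ?n" for i
      using \<sigma>''i that by (intro subst_cong) auto
    have shiftQ: "shift j Q = QF j" if "j < ?n" for j
      using that unfolding Q_def shift_def by auto
    have nQ: "[] \<notin> Q" unfolding Q_def by auto
    have "dc R2 (Fun f ls) \<sigma> u (Q, rl, \<rho>, \<sigma>'')"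
      unfolding dc_def split
    proof (intro conjI)
      show "finite Q" unfolding Q_def using F' by (auto simp: dc_def)
      show "parallel_set Q" unfolding parallel_set_def
      proof (intro ballI impI)
        fix p q assume "p \<in> Q" "q \<in> Q" "p \<noteq> q"
        then obtain i p' j q' where p: "p = i#p'" "i < ?n" "p' \<in> QF i" and q: "q = j#q'" "j < ?n" "q' \<in> QF j"
          unfolding Q_def by auto
        show "\<nexists>r. q = p @ r"
        proof (cases "i = j")
          case True
          then have "parallel_set (QF i)" using F'[OF p(2)] by (auto simp: dc_def)
          then show ?thesis using p q True \<open>p \<noteq> q\<close> unfolding parallel_set_def by auto
        qed (use p q in auto)
      qed
      show "Q \<subseteq> fun_poss (Fun f ls)"
      proof
        fix p assume "p \<in> Q"
        then obtain i p' where p: "p = i#p'" "i < ?n" "p' \<in> QF i" unfolding Q_def by auto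
        then have "p' \<in> fun_poss (ls!i)" using F'[OF p(2)] by (auto simp: dc_def)
        then show "p \<in> fun_poss (Fun f ls)" using p by (simp add: fun_poss_Fun)
      qed
      show "\<forall>q\<in>Q. rl q \<in> R2 \<and> subt_at (subst (Fun f ls) \<sigma>) q = subst (fst (rl q)) (\<rho> q) \<and>
             subt_at (subst (Fun f ls) \<sigma>'') q = subst (fst (rl q)) (\<rho> q)"
      proof
        fix p assume "p \<in> Q"
        then obtain i p' where p: "p = i#p'" "i < ?n" "p' \<in> QF i" unfolding Q_def by auto
        then show "rl p \<in> R2 \<and> subt_at (subst (Fun f ls) \<sigma>) p = subst (fst (rl p)) (\<rho> p) \<and>
             subt_at (subst (Fun f ls) \<sigma>'') p = subst (fst (rl p)) (\<rho> p)"
          using F'[OF p(2)] subst_i[OF p(2)] unfolding rl_def \<rho>_def by (auto simp: dc_def)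
      qed
      show "\<forall>y. par R2 (\<sigma> y) (\<sigma>'' y)"
      proof
        fix y
        show "par R2 (\<sigma> y) (\<sigma>'' y)"
        proof (cases "\<exists>i<?n. y \<in> vars_trm (ls!i)")
          case True
          then obtain i where "i < ?n" "y \<in> vars_trm (ls!i)" by blast
          then show ?thesis using \<sigma>''i F'[of i] by (auto simp: dc_def)
        next
          case False
          then have "\<sigma>'' y = \<sigma> y" unfolding \<sigma>''_def by meson
          then show ?thesis by simp
        qed
      qed
      show "u = prep (subst (Fun f ls) \<sigma>'') Q (\<lambda>q. subst (snd (rl q)) (\<rho> q))"
        unfolding u using nQ
      proof (simp, intro nth_equalityI)
        show "length us = length (map (\<lambda>i. prep (map (\<lambda>t. subst t \<sigma>'') ls ! i) (shift i Q)
                 (\<lambda>p. subst (snd (rl (i # p))) (\<rho> (i # p)))) [0..<?n])" using lus by simp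
      next
        fix i assume "i < length us"
        then have i: "i < ?n" using lus by simp
        have "us!i = prep (subst (ls!i) (\<sigma>F i)) (QF i) (\<lambda>q. subst (snd (rlF i q)) (\<rho>F i q))"
          using F'[OF i] by (auto simp: dc_def)
        then show "us ! i = map (\<lambda>i. prep (map (\<lambda>t. subst t \<sigma>'') ls ! i) (shift i Q)
                 (\<lambda>p. subst (snd (rl (i # p))) (\<rho> (i # p)))) [0..<?n] ! i"
          using i subst_i[OF i] shiftQ[OF i] unfolding rl_def \<rho>_def by simp
      qed
    qed
    then show ?thesis by blast
  next
    case (par_root l' r' \<sigma>')
    let ?X = "({[]}::pos set, (\<lambda>_. (l',r')) :: pos \<Rightarrow> ('a,'b) rule, (\<lambda>_. \<sigma>'), \<sigma>)"
    have "dc R2 (Fun f ls) \<sigma> u ?X"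
      using par_root by (auto simp: dc_def parallel_set_def fun_poss_root prep_root)
    then show ?thesis by blast
  qed
qed



section \<open>Unification of linear variable-disjoint terms\<close>

definition smgu :: "('f,'v) trm \<Rightarrow> ('f,'v) trm \<Rightarrow> ('v \<Rightarrow> ('f,'v) trm) \<Rightarrow> bool" where
  "smgu s t \<mu> = (subst s \<mu> = subst t \<mu> \<and> (\<forall>\<tau> :: 'v \<Rightarrow> ('f,'v) trm. subst s \<tau> = subst t \<tau> \<longrightarrow> (\<forall>z. \<tau> z = subst (\<mu> z) \<tau>)))"

lemma lu:
  fixes s t :: "('f,'v) trm" and \<theta> :: "'v \<Rightarrow> ('f,'v) trm"
  shows "linear_trm s \<Longrightarrow> linear_trm t \<Longrightarrow> vars_trm s \<inter> vars_trm t = {} \<Longrightarrow> subst s \<theta> = subst t \<theta> \<Longrightarrow>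
   \<exists>\<mu>. smgu s t \<mu>"
proof (induction s arbitrary: t \<theta>)
  case (Var x)
  define \<mu> where "\<mu> = Var(x := t)"
  have "subst t \<mu> = t" using Var(3) unfolding \<mu>_def by (subst subst_cong[of t _ Var]) auto
  then have "subst (Var x) \<mu> = subst t \<mu>" unfolding \<mu>_def by simp
  moreover have "\<forall>\<tau> :: 'v \<Rightarrow> ('f,'v) trm. subst (Var x) \<tau> = subst t \<tau> \<longrightarrow> (\<forall>z. \<tau> z = subst (\<mu> z) \<tau>)"
    unfolding \<mu>_def by auto
  ultimately show ?case unfolding smgu_def by blast
next
  case (Fun f ss)
  show ?case
  proof (cases t)
    case (Var y)
    define \<mu> where "\<mu> = Var(y := Fun f ss)"
    have "subst (Fun f ss) \<mu> = Fun f ss" using Fun(4) Var unfolding \<mu>_def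
      by (subst subst_cong[of _ _ Var]) auto
    then have "subst (Fun f ss) \<mu> = subst t \<mu>" unfolding \<mu>_def Var by simp
    moreover have "\<forall>\<tau> :: 'v \<Rightarrow> ('f,'v) trm. subst (Fun f ss) \<tau> = subst t \<tau> \<longrightarrow> (\<forall>z. \<tau> z = subst (\<mu> z) \<tau>)"
      unfolding \<mu>_def Var by auto
    ultimately show ?thesis unfolding smgu_def by blast
  next
    case (Fun g ts)
    note t = this
    let ?n = "length ss"
    from Fun.prems(4) t have fg: "f = g" and e: "map (\<lambda>t. subst t \<theta>) ss = map (\<lambda>t. subst t \<theta>) ts"
      by auto
    from arg_cong[OF e, of length] have len: "length ts = ?n" by simp
    have eqi: "subst (ss!i) \<theta> = subst (ts!i) \<theta>" if "i < ?n" for i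
      using arg_cong[OF e, of "\<lambda>xs. xs!i"] that len by simp
    have "\<forall>i. \<exists>\<mu>. i < ?n \<longrightarrow> smgu (ss!i) (ts!i) \<mu>"
    proof
      fix i
      show "\<exists>\<mu>. i < ?n \<longrightarrow> smgu (ss!i) (ts!i) \<mu>"
      proof (cases "i < ?n")
        case True
        have l1: "linear_trm (ss!i)" using Fun.prems(1) True by simp
        have l2: "linear_trm (ts!i)" using Fun.prems(2) True len t by simp
        have "ss!i \<in> set ss" "ts!i \<in> set ts" using True len by auto
        then have d: "vars_trm (ss!i) \<inter> vars_trm (ts!i) = {}" using Fun.prems(3) t by auto
        from Fun.IH[OF nth_mem[OF True] l1 l2 d eqi[OF True]] show ?thesis by blast
      qed simp
    qed
    then obtain M where M0: "\<And>i. i < ?n \<Longrightarrow> smgu (ss!i) (ts!i) (M i)"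
      by metis
    note M = M0[unfolded smgu_def]
    define B where "B i = vars_trm (ss!i) \<union> vars_trm (ts!i)" for i
    have uniq: "i = j" if "i < ?n" "j < ?n" "z \<in> B i" "z \<in> B j" for i j z
    proof (rule ccontr)
      assume ij: "i \<noteq> j"
      have ds: "vars_trm (ss!i) \<inter> vars_trm (ss!j) = {}" using Fun.prems(1) that ij by auto
      have dt: "vars_trm (ts!i) \<inter> vars_trm (ts!j) = {}" using Fun.prems(2) that ij t len by auto
      have "vars_trm (ss!i) \<subseteq> vars_trm (Fun f ss)" "vars_trm (ss!j) \<subseteq> vars_trm (Fun f ss)"
        using that by (auto dest!: nth_mem)
      moreover have "ts!i \<in> set ts" "ts!j \<in> set ts" using that len by auto
      then have "vars_trm (ts!i) \<subseteq> vars_trm t" "vars_trm (ts!j) \<subseteq> vars_trm t"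
        using t by auto
      ultimately show False using that ds dt Fun.prems(3) unfolding B_def by blast
    qed
    define \<mu> where "\<mu> z = (if \<exists>i<?n. z \<in> B i then M (SOME i. i < ?n \<and> z \<in> B i) z else Var z)" for z
    have \<mu>i: "\<mu> z = M i z" if "i < ?n" "z \<in> B i" for i z
    proof -
      have ex: "\<exists>i<?n. z \<in> B i" using that by blast
      have "(SOME i. i < ?n \<and> z \<in> B i) = i" using someI_ex[OF ex] uniq that by blast
      then show ?thesis unfolding \<mu>_def using ex by simp
    qed
    have si: "subst (ss!i) \<mu> = subst (ss!i) (M i)" "subst (ts!i) \<mu> = subst (ts!i) (M i)" if "i < ?n" for i
      using \<mu>i that unfolding B_def by (auto intro!: subst_cong)
    have unif: "subst (Fun f ss) \<mu> = subst t \<mu>"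
      using t fg len si M by (auto intro!: nth_equalityI)
    have mg: "\<forall>\<tau> :: 'v \<Rightarrow> ('f,'v) trm. subst (Fun f ss) \<tau> = subst t \<tau> \<longrightarrow> (\<forall>z. \<tau> z = subst (\<mu> z) \<tau>)"
    proof (intro allI impI)
      fix \<tau> :: "'v \<Rightarrow> ('f,'v) trm" and z assume u: "subst (Fun f ss) \<tau> = subst t \<tau>"
      then have e2: "map (\<lambda>t. subst t \<tau>) ss = map (\<lambda>t. subst t \<tau>) ts" using t by simp
      have ui: "subst (ss!i) \<tau> = subst (ts!i) \<tau>" if "i < ?n" for i
        using arg_cong[OF e2, of "\<lambda>xs. xs!i"] that len by simp
      show "\<tau> z = subst (\<mu> z) \<tau>"
      proof (cases "\<exists>i<?n. z \<in> B i")
        case True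
        then obtain i where i: "i < ?n" "z \<in> B i" by blast
        have "\<tau> z = subst (M i z) \<tau>" using M[OF i(1)] ui[OF i(1)] by blast
        then show ?thesis using \<mu>i[OF i] by simp
      next
        case False
        then have "\<mu> z = Var z" unfolding \<mu>_def by meson
        then show ?thesis by simp
      qed
    qed
    show ?thesis using unif mg unfolding smgu_def by blast
  qed
qed



section \<open>Renaming\<close>

lemma vars_rename: "vars_trm (subst t (Var \<circ> \<pi>)) = \<pi> ` vars_trm t"
  by (induction t) auto

lemma linear_rename: "inj \<pi> \<Longrightarrow> linear_trm t \<Longrightarrow> linear_trm (subst t (Var \<circ> \<pi>))"
proof (induction t)
  case (Fun f ts)
  show ?case
  proof (simp, intro conjI allI impI ballI)
    fix s assume "s \<in> set ts"
    then show "linear_trm (subst s (\<lambda>a. Var (\<pi> a)))" using Fun by (simp add: comp_def)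
  next
    fix i j assume "i < length ts" "j < length ts" "i \<noteq> j"
    then have "vars_trm (ts!i) \<inter> vars_trm (ts!j) = {}" using Fun.prems by auto
    moreover have "vars_trm (subst (ts!k) (\<lambda>a. Var (\<pi> a))) = \<pi> ` vars_trm (ts!k)" for k
      using vars_rename[of "ts!k" \<pi>] by (simp add: comp_def)
    ultimately show "vars_trm (subst (ts!i) (\<lambda>a. Var (\<pi> a))) \<inter> vars_trm (subst (ts!j) (\<lambda>a. Var (\<pi> a))) = {}"
      using Fun.prems(1) by (simp add: image_Int[symmetric])
  qed
qed simp

lemma linear_subt: "is_pos l p \<Longrightarrow> linear_trm l \<Longrightarrow> linear_trm (subt_at l p)"
  by (induction l p rule: is_pos.induct) auto

lemma vars_subt: "is_pos l p \<Longrightarrow> vars_trm (subt_at l p) \<subseteq> vars_trm l"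
  by (induction l p rule: is_pos.induct) (auto dest!: nth_mem)

lemma linear_subt_disj:
  "linear_trm l \<Longrightarrow> is_pos l p \<Longrightarrow> is_pos l q \<Longrightarrow> ppar p q \<Longrightarrow> vars_trm (subt_at l p) \<inter> vars_trm (subt_at l q) = {}"
proof (induction l arbitrary: p q)
  case (Var x)
  then have "p = []" "q = []" by (auto elim: is_pos.elims)
  then show ?case using Var by (simp add: ppar_def)
next
  case (Fun f ts)
  obtain i p' where p: "p = i#p'" using Fun.prems(4) by (cases p) (auto simp: ppar_def)
  obtain j q' where q: "q = j#q'" using Fun.prems(4) by (cases q) (auto simp: ppar_def)
  have i: "i < length ts" "is_pos (ts!i) p'" and j: "j < length ts" "is_pos (ts!j) q'"
    using Fun.prems p q by auto
  show ?case
  proof (cases "i = j")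
    case True
    then show ?thesis using Fun.IH[of "ts!i" p' q'] Fun.prems i j p q by auto
  next
    case False
    then have "vars_trm (ts!i) \<inter> vars_trm (ts!j) = {}" using Fun.prems(1) i j by auto
    then show ?thesis using vars_subt[OF i(2)] vars_subt[OF j(2)] p q by auto
  qed
qed

lemma fresh_perm:
  assumes inf: "infinite (UNIV :: 'v set)" and fV: "finite (V :: 'v set)" and fF: "finite (F :: 'v set)"
  shows "\<exists>\<pi>. bij \<pi> \<and> \<pi> ` V \<inter> F = {}"
proof -
  have "infinite (UNIV - (V \<union> F))" using inf fV fF by auto
  then obtain W where fW: "finite W" and cW: "card W = card V" and W: "W \<subseteq> UNIV - (V \<union> F)"
    using infinite_arbitrarily_large by blast
  obtain h where h: "bij_betw h V W" using finite_same_card_bij[OF fV fW cW[symmetric]] by blast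
  define \<pi> where "\<pi> x = (if x \<in> V then h x else if x \<in> W then inv_into V h x else x)" for x
  have VW: "\<And>x. x \<in> W \<Longrightarrow> x \<notin> V" using W by blast
  have hV: "h ` V = W" using h by (simp add: bij_betw_def)
  have inj: "inj_on h V" using h by (simp add: bij_betw_def)
  have inv: "\<pi> (\<pi> x) = x" for x
  proof (cases "x \<in> V")
    case True
    then have hx: "h x \<in> W" using hV by blast
    then have "h x \<notin> V" using VW by blast
    then have "\<pi> (h x) = inv_into V h (h x)" unfolding \<pi>_def using hx by simp
    also have "\<dots> = x" using inv_into_f_f[OF inj True] .
    finally have e: "\<pi> (h x) = x" .
    have "\<pi> x = h x" unfolding \<pi>_def using True by simp
    then show ?thesis using e by simp
  next
    case False
    show ?thesis
    proof (cases "x \<in> W")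
      case True
      have xi: "x \<in> h ` V" using True hV by simp
      have y: "inv_into V h x \<in> V" using inv_into_into[OF xi] .
      have "\<pi> x = inv_into V h x" unfolding \<pi>_def using True False by simp
      moreover have "\<pi> (inv_into V h x) = h (inv_into V h x)" unfolding \<pi>_def using y by simp
      moreover have "h (inv_into V h x) = x" using f_inv_into_f[OF xi] .
      ultimately show ?thesis by simp
    next
      case False2: False
      then show ?thesis unfolding \<pi>_def using False by simp
    qed
  qed
  have pp: "\<pi> \<circ> \<pi> = id" by (rule ext) (simp add: inv)
  have b: "bij \<pi>" by (rule o_bij[OF pp pp])
  have "\<pi> ` V = W" using hV unfolding \<pi>_def by (auto simp: image_def)
  then have "\<pi> ` V \<inter> F = {}" using W by blast
  with b show ?thesis by blast
qed

lemma fresh_perms: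
  assumes inf: "infinite (UNIV :: 'v set)" and fV: "\<And>q. finite (V q :: 'v set)"
  shows "finite (F :: 'v set) \<Longrightarrow> \<exists>\<pi>. (\<forall>q\<in>set qs. bij (\<pi> q) \<and> \<pi> q ` V q \<inter> F = {}) \<and>
     (\<forall>q\<in>set qs. \<forall>q'\<in>set qs. q \<noteq> q' \<longrightarrow> \<pi> q ` V q \<inter> \<pi> q' ` V q' = {})"
proof (induction qs arbitrary: F)
  case Nil then show ?case by simp
next
  case (Cons q qs)
  obtain \<pi>0 where p0: "bij \<pi>0" "\<pi>0 ` V q \<inter> F = {}" using fresh_perm[OF inf fV[of q] Cons.prems] by blast
  have "finite (F \<union> \<pi>0 ` V q)" using Cons.prems fV by simp
  from Cons.IH[OF this] obtain \<pi>' where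
    p1: "\<forall>a\<in>set qs. bij (\<pi>' a) \<and> \<pi>' a ` V a \<inter> (F \<union> \<pi>0 ` V q) = {}"
    and p2: "\<forall>a\<in>set qs. \<forall>b\<in>set qs. a \<noteq> b \<longrightarrow> \<pi>' a ` V a \<inter> \<pi>' b ` V b = {}"
    by blast
  define \<pi> where "\<pi> = \<pi>'(q := \<pi>0)"
  have A: "\<forall>a\<in>set (q#qs). bij (\<pi> a) \<and> \<pi> a ` V a \<inter> F = {}"
  proof
    fix a assume a: "a \<in> set (q#qs)"
    show "bij (\<pi> a) \<and> \<pi> a ` V a \<inter> F = {}"
    proof (cases "a = q")
      case True then show ?thesis using p0 unfolding \<pi>_def by simp
    next
      case False
      then have "a \<in> set qs" using a by simp
      then have "bij (\<pi>' a)" "\<pi>' a ` V a \<inter> F = {}" using p1 by blast+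
      then show ?thesis unfolding \<pi>_def using False by simp
    qed
  qed
  have B: "\<forall>a\<in>set (q#qs). \<forall>b\<in>set (q#qs). a \<noteq> b \<longrightarrow> \<pi> a ` V a \<inter> \<pi> b ` V b = {}"
  proof (intro ballI impI)
    fix a b assume a: "a \<in> set (q#qs)" and b: "b \<in> set (q#qs)" and ab: "a \<noteq> b"
    show "\<pi> a ` V a \<inter> \<pi> b ` V b = {}"
    proof (cases "a = q")
      case True
      then have bq: "b \<in> set qs" "b \<noteq> q" using b ab by auto
      then have "\<pi>' b ` V b \<inter> \<pi>0 ` V q = {}" using p1 by blast
      then show ?thesis using True bq unfolding \<pi>_def by auto
    next
      case False
      then have aq: "a \<in> set qs" using a by auto
      show ?thesis
      proof (cases "b = q")
        case True
        have "\<pi>' a ` V a \<inter> \<pi>0 ` V q = {}" using p1 aq by blast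
        then show ?thesis using True False unfolding \<pi>_def by auto
      next
        case False2: False
        then have "b \<in> set qs" using b by auto
        then have "\<pi>' a ` V a \<inter> \<pi>' b ` V b = {}" using p2 aq ab by blast
        then show ?thesis using False False2 unfolding \<pi>_def by simp
      qed
    qed
  qed
  show ?case using A B by blast
qed



lemma prep_cong: "(\<forall>p\<in>P. g p = g' p) \<Longrightarrow> prep t P g = prep t P g'"
proof (induction t arbitrary: P g g')
  case (Var x) then show ?case by simp
next
  case (Fun f ts)
  have "\<And>i. i < length ts \<Longrightarrow> prep (ts!i) (shift i P) (\<lambda>p. g (i#p)) = prep (ts!i) (shift i P) (\<lambda>p. g' (i#p))"
    using Fun by (intro Fun.IH) (auto simp: shift_def)
  then show ?case using Fun.prems by auto
qed

lemma finite_vars: "finite (vars_trm t)"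
  by (induction t) auto

lemma rename_subst: "subst (subst t (Var \<circ> \<pi>)) \<sigma> = subst t (\<lambda>x. \<sigma> (\<pi> x))"
  by (simp add: subst_subst)

lemma inst:
  fixes l r :: "('f,'v) trm" and rl :: "pos \<Rightarrow> ('f,'v) rule" and \<sigma> :: "'v \<Rightarrow> ('f,'v) trm"
    and \<rho> :: "pos \<Rightarrow> 'v \<Rightarrow> ('f,'v) trm"
  assumes inf: "infinite (UNIV::'v set)" and trs: "trs R" and ll: "left_linear R"
    and lr: "(l,r) \<in> R" and fin: "finite Q" and ne: "Q \<noteq> {}" and par: "parallel_set Q" and Qf: "Q \<subseteq> fun_poss l"
    and rlR: "\<forall>q\<in>Q. rl q \<in> R"
    and i0: "\<forall>q\<in>Q. subt_at (subst l \<sigma>) q = subst (fst (rl q)) (\<rho> q)"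
  shows "(\<forall>(\<theta>::'v \<Rightarrow> ('f,'v) trm) (\<rho>'::pos \<Rightarrow> 'v \<Rightarrow> ('f,'v) trm). (\<forall>q\<in>Q. subt_at (subst l \<theta>) q = subst (fst (rl q)) (\<rho>' q)) \<longrightarrow>
            prep (subst l \<theta>) Q (\<lambda>q. subst (snd (rl q)) (\<rho>' q)) = subst r \<theta>)
       \<or> (\<exists>t0 s0 u0. (t0,s0,u0) \<in> pcpeaks R \<and>
            (\<forall>(\<theta>::'v \<Rightarrow> ('f,'v) trm) (\<rho>'::pos \<Rightarrow> 'v \<Rightarrow> ('f,'v) trm). (\<forall>q\<in>Q. subt_at (subst l \<theta>) q = subst (fst (rl q)) (\<rho>' q)) \<longrightarrow>
              (\<exists>\<tau>. subst s0 \<tau> = subst l \<theta> \<and>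
                   subst t0 \<tau> = prep (subst l \<theta>) Q (\<lambda>q. subst (snd (rl q)) (\<rho>' q)) \<and>
                   subst u0 \<tau> = subst r \<theta>)))"
proof -
  define V0 where "V0 = vars_rule (l,r)"
  define Vq where "Vq q = vars_rule (rl q)" for q
  have fV0: "finite V0" unfolding V0_def vars_rule_def by (simp add: finite_vars)
  have fVq: "\<And>q. finite (Vq q)" unfolding Vq_def vars_rule_def by (simp add: finite_vars)
  define qs where "qs = sorted_list_of_set Q"
  have sqs: "set qs = Q" "distinct qs" unfolding qs_def using fin by auto
  obtain \<pi> where pb: "\<forall>q\<in>set qs. bij (\<pi> q) \<and> \<pi> q ` Vq q \<inter> V0 = {}"
    and pd: "\<forall>q\<in>set qs. \<forall>q'\<in>set qs. q \<noteq> q' \<longrightarrow> \<pi> q ` Vq q \<inter> \<pi> q' ` Vq q' = {}"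
    using fresh_perms[where V=Vq and F=V0 and qs=qs, OF inf fVq fV0] by (elim exE conjE) blast
  have pbQ: "\<And>q. q \<in> Q \<Longrightarrow> bij (\<pi> q)" "\<And>q. q \<in> Q \<Longrightarrow> \<pi> q ` Vq q \<inter> V0 = {}"
    using pb unfolding sqs by simp_all
  have pdQ: "\<And>q q'. q \<in> Q \<Longrightarrow> q' \<in> Q \<Longrightarrow> q \<noteq> q' \<Longrightarrow> \<pi> q ` Vq q \<inter> \<pi> q' ` Vq q' = {}"
    using pd unfolding sqs by simp
  define rl' where "rl' q = (subst (fst (rl q)) (Var \<circ> \<pi> q), subst (snd (rl q)) (Var \<circ> \<pi> q))" for q
  have vrl': "vars_rule (rl' q) = \<pi> q ` Vq q" for q
    unfolding rl'_def Vq_def vars_rule_def by (simp add: vars_rename image_Un)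
  have lin_l: "linear_trm l" using ll lr unfolding left_linear_def by auto
  have vr: "vars_trm r \<subseteq> vars_trm l" using trs lr unfolding trs_def by auto
  have isp: "\<And>q. q \<in> Q \<Longrightarrow> is_pos l q" using Qf fun_poss_is_pos by blast
  define tau where "tau \<theta> \<rho>' z = (if z \<in> V0 then \<theta> z else if \<exists>q\<in>Q. z \<in> \<pi> q ` Vq q then
      (let q = SOME q. q \<in> Q \<and> z \<in> \<pi> q ` Vq q in \<rho>' q (inv (\<pi> q) z)) else Var z)"
    for \<theta> :: "'v \<Rightarrow> ('f,'v) trm" and \<rho>' :: "pos \<Rightarrow> 'v \<Rightarrow> ('f,'v) trm" and z
  have tau_V0: "tau \<theta> \<rho>' z = \<theta> z" if "z \<in> V0" for \<theta> \<rho>' z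
    using that unfolding tau_def by simp
  have tau_q: "tau \<theta> \<rho>' (\<pi> q x) = \<rho>' q x" if q: "q \<in> Q" and x: "x \<in> Vq q" for \<theta> \<rho>' q x
  proof -
    have nV0: "\<pi> q x \<notin> V0" using pbQ(2)[OF q] x by blast
    have ex: "\<exists>q'\<in>Q. \<pi> q x \<in> \<pi> q' ` Vq q'" using q x by blast
    define q0 where "q0 = (SOME q'. q' \<in> Q \<and> \<pi> q x \<in> \<pi> q' ` Vq q')"
    have "\<exists>q'. q' \<in> Q \<and> \<pi> q x \<in> \<pi> q' ` Vq q'" using q x by blast
    then have sq: "q0 \<in> Q \<and> \<pi> q x \<in> \<pi> q0 ` Vq q0" unfolding q0_def by (rule someI_ex)
    have "q0 = q"
    proof (rule ccontr)
      assume "q0 \<noteq> q"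
      then have "\<pi> q ` Vq q \<inter> \<pi> q0 ` Vq q0 = {}" using pdQ[OF q] sq by blast
      moreover have "\<pi> q x \<in> \<pi> q ` Vq q" using x by blast
      ultimately show False using sq by blast
    qed
    then have "(SOME q'. q' \<in> Q \<and> \<pi> q x \<in> \<pi> q' ` Vq q') = q" unfolding q0_def .
    moreover have "inv (\<pi> q) (\<pi> q x) = x" using pbQ(1)[OF q] by (simp add: bij_is_inj)
    ultimately show ?thesis unfolding tau_def using nV0 ex by (simp add: Let_def)
  qed
  have tau_t: "subst t (tau \<theta> \<rho>') = subst t \<theta>" if "vars_trm t \<subseteq> V0" for t \<theta> \<rho>'
    using that tau_V0 by (intro subst_cong) auto
  have tau_rl1: "subst (fst (rl' q)) (tau \<theta> \<rho>') = subst (fst (rl q)) (\<rho>' q)" if q: "q \<in> Q" for q \<theta> \<rho>'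
    unfolding rl'_def fst_conv rename_subst
    using tau_q[OF q] unfolding Vq_def vars_rule_def by (intro subst_cong) auto
  have tau_rl2: "subst (snd (rl' q)) (tau \<theta> \<rho>') = subst (snd (rl q)) (\<rho>' q)" if q: "q \<in> Q" for q \<theta> \<rho>'
    unfolding rl'_def snd_conv rename_subst
    using tau_q[OF q] unfolding Vq_def vars_rule_def by (intro subst_cong) auto
  have vl: "vars_trm l \<subseteq> V0" and vr0: "vars_trm r \<subseteq> V0" unfolding V0_def vars_rule_def by auto
  have vsub: "\<And>q. q \<in> Q \<Longrightarrow> vars_trm (subt_at l q) \<subseteq> V0" using vars_subt isp vl by blast
  define U where "U \<tau> = (\<forall>q\<in>Q. subst (fst (rl' q)) \<tau> = subst (subt_at l q) \<tau>)" for \<tau> :: "'v \<Rightarrow> ('f,'v) trm"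
  have tau_U: "U (tau \<theta> \<rho>')" if cond: "\<forall>q\<in>Q. subt_at (subst l \<theta>) q = subst (fst (rl q)) (\<rho>' q)" for \<theta> \<rho>'
    unfolding U_def
  proof
    fix q assume q: "q \<in> Q"
    have "subst (fst (rl' q)) (tau \<theta> \<rho>') = subt_at (subst l \<theta>) q" using tau_rl1[OF q] cond q by simp
    also have "\<dots> = subst (subt_at l q) \<theta>" using subt_at_subst[OF isp[OF q]] .
    also have "\<dots> = subst (subt_at l q) (tau \<theta> \<rho>')" using tau_t[OF vsub[OF q]] by simp
    finally show "subst (fst (rl' q)) (tau \<theta> \<rho>') = subst (subt_at l q) (tau \<theta> \<rho>')" .
  qed
  obtain f0 ls where lF: "l = Fun f0 ls" using trs lr unfolding trs_def by (cases l) auto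
  define S where "S = Fun f0 (map (\<lambda>q. fst (rl' q)) qs)"
  define T where "T = Fun f0 (map (\<lambda>q. subt_at l q) qs)"
  have ST_U: "(subst S \<tau> = subst T \<tau>) = U \<tau>" for \<tau>
    unfolding S_def T_def U_def using sqs by (auto simp: map_eq_conv)
  have linS: "linear_trm S"
    unfolding S_def
  proof (simp, intro conjI ballI allI impI)
    fix q assume q: "q \<in> set qs"
    obtain a b where ab: "rl q = (a,b)" by (cases "rl q")
    have "(a,b) \<in> R" using rlR q sqs ab by auto
    with ll[unfolded left_linear_def] have "case (a,b) of (l,r) \<Rightarrow> linear_trm l" by (rule bspec)
    then have "linear_trm (fst (rl q))" using ab by simp
    then show "linear_trm (fst (rl' q))" unfolding rl'_def fst_conv
      using pbQ(1)[of q] q sqs by (intro linear_rename) (auto simp: bij_is_inj)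
  next
    fix i j assume ij: "i < length qs" "j < length qs" "i \<noteq> j"
    have q: "qs!i \<in> Q" "qs!j \<in> Q" using ij(1,2) sqs(1) nth_mem by blast+
    have "qs!i \<noteq> qs!j" using nth_eq_iff_index_eq[OF sqs(2) ij(1,2)] ij(3) by simp
    from pdQ[OF q this] have "vars_rule (rl' (qs!i)) \<inter> vars_rule (rl' (qs!j)) = {}" unfolding vrl' .
    then show "vars_trm (fst (rl' (qs!i))) \<inter> vars_trm (fst (rl' (qs!j))) = {}"
      unfolding vars_rule_def by blast
  qed
  have linT: "linear_trm T"
    unfolding T_def
  proof (simp, intro conjI ballI allI impI)
    fix q assume q: "q \<in> set qs"
    then have "q \<in> Q" using sqs by simp
    from linear_subt[OF isp[OF this] lin_l] show "linear_trm (subt_at l q)" .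
  next
    fix i j assume ij: "i < length qs" "j < length qs" "i \<noteq> j"
    have q: "qs!i \<in> Q" "qs!j \<in> Q" using ij(1,2) sqs(1) nth_mem by blast+
    have ne: "qs!i \<noteq> qs!j" using nth_eq_iff_index_eq[OF sqs(2) ij(1,2)] ij(3) by simp
    have "\<nexists>r. qs!j = qs!i @ r" using par q ne unfolding parallel_set_def by blast
    moreover have "\<nexists>r. qs!i = qs!j @ r" using par q ne unfolding parallel_set_def by metis
    ultimately have "ppar (qs!i) (qs!j)" unfolding ppar_def by blast
    then show "vars_trm (subt_at l (qs!i)) \<inter> vars_trm (subt_at l (qs!j)) = {}"
      using linear_subt_disj[OF lin_l isp[OF q(1)] isp[OF q(2)]] by blast
  qed
  have dST: "vars_trm S \<inter> vars_trm T = {}"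
  proof -
    have "vars_trm S \<subseteq> (\<Union>q\<in>Q. \<pi> q ` Vq q)" unfolding S_def using sqs vrl'
      unfolding vars_rule_def by auto
    moreover have "vars_trm T \<subseteq> V0" unfolding T_def using sqs vsub by auto
    ultimately show ?thesis using pbQ(2) by blast
  qed
  have "U (tau \<sigma> \<rho>)" using tau_U i0 by blast
  then have "subst S (tau \<sigma> \<rho>) = subst T (tau \<sigma> \<rho>)" using ST_U by simp
  from lu[OF linS linT dST this] obtain \<mu> where sm: "smgu S T \<mu>" by blast
  have Umu: "U \<mu>" using sm ST_U unfolding smgu_def by simp
  have gen: "\<And>\<tau>. U \<tau> \<Longrightarrow> \<forall>z. \<tau> z = subst (\<mu> z) \<tau>" using sm ST_U unfolding smgu_def by simp
  have gen2: "subst (subst w \<mu>) \<tau> = subst w \<tau>" if "U \<tau>" for w \<tau>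
  proof -
    have "(\<lambda>x. subst (\<mu> x) \<tau>) = \<tau>" using gen[OF that] by (simp add: fun_eq_iff)
    then show ?thesis by (simp add: subst_subst)
  qed
  define E where "E = {(fst (rl' p), subt_at l p) | p. p \<in> Q}"
  have unifE: "unifier \<tau> E = U \<tau>" for \<tau> unfolding unifier_def E_def U_def by auto
  have mguE: "mgu \<mu> E" unfolding mgu_def unifE using Umu gen by blast
  show ?thesis
  proof (cases "Q = {[]} \<and> variant (rl' []) (l,r)")
    case True
    then have Q: "Q = {[]}" and v: "variant (rl' []) (l,r)" by auto
    obtain \<pi>' where "bij \<pi>'" and rl'e: "rl' [] = (subst l (Var \<circ> \<pi>'), subst r (Var \<circ> \<pi>'))"
      using v unfolding variant_def by auto
    have "\<forall>(\<theta>::'v \<Rightarrow> ('f,'v) trm) (\<rho>'::pos \<Rightarrow> 'v \<Rightarrow> ('f,'v) trm). (\<forall>q\<in>Q. subt_at (subst l \<theta>) q = subst (fst (rl q)) (\<rho>' q)) \<longrightarrow>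
            prep (subst l \<theta>) Q (\<lambda>q. subst (snd (rl q)) (\<rho>' q)) = subst r \<theta>"
    proof (intro allI impI)
      fix \<theta> :: "'v \<Rightarrow> ('f,'v) trm" and \<rho>' :: "pos \<Rightarrow> 'v \<Rightarrow> ('f,'v) trm"
      assume cond: "\<forall>q\<in>Q. subt_at (subst l \<theta>) q = subst (fst (rl q)) (\<rho>' q)"
      let ?\<tau> = "tau \<theta> \<rho>'"
      have "U ?\<tau>" using tau_U[OF cond] .
      then have "subst (fst (rl' [])) ?\<tau> = subst (subt_at l []) ?\<tau>" unfolding U_def Q by simp
      then have "subst l (\<lambda>x. ?\<tau> (\<pi>' x)) = subst l ?\<tau>" using rl'e by (simp add: rename_subst)
      then have eqv: "\<And>x. x \<in> vars_trm l \<Longrightarrow> ?\<tau> (\<pi>' x) = ?\<tau> x" using subst_eq_vars by metis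
      have "subst (snd (rl' [])) ?\<tau> = subst r (\<lambda>x. ?\<tau> (\<pi>' x))" using rl'e by (simp add: rename_subst)
      also have "\<dots> = subst r ?\<tau>" using eqv vr by (intro subst_cong) auto
      also have "\<dots> = subst r \<theta>" using tau_t[OF vr0] .
      finally have "subst (snd (rl [])) (\<rho>' []) = subst r \<theta>" using tau_rl2[of "[]"] Q by simp
      then show "prep (subst l \<theta>) Q (\<lambda>q. subst (snd (rl q)) (\<rho>' q)) = subst r \<theta>"
        using Q by (simp add: prep_root)
    qed
    then show ?thesis by blast
  next
    case False
    define t0 where "t0 = par_replace (subst l \<mu>) Q (\<lambda>p. subst (snd (rl' p)) \<mu>)"
    define s0 where "s0 = subst l \<mu>"
    define u0 where "u0 = subst r \<mu>"
    have vid: "variant_of (l,r) R" unfolding variant_of_def variant_def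
      using lr by (intro bexI[of _ "(l,r)"] exI[of _ id]) auto
    have vq: "\<forall>p\<in>Q. variant_of (rl' p) R"
    proof
      fix p assume p: "p \<in> Q"
      show "variant_of (rl' p) R" unfolding variant_of_def variant_def
        using rlR p pbQ(1)[OF p] by (intro bexI[of _ "rl p"] exI[of _ "\<pi> p"]) (auto simp: rl'_def)
    qed
    have d1: "\<forall>p\<in>Q. vars_rule (l, r) \<inter> vars_rule (rl' p) = {}"
      using pbQ(2) vrl' unfolding V0_def by blast
    have d2: "\<forall>p\<in>Q. \<forall>q\<in>Q. p \<noteq> q \<longrightarrow> vars_rule (rl' p) \<inter> vars_rule (rl' q) = {}"
      using pdQ vrl' by simp
    have ex: "Q = {[]} \<longrightarrow> \<not> variant (rl' []) (l, r)" using False by blast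
    have pk: "(t0, s0, u0) \<in> pcpeaks R"
      unfolding pcpeaks_def mem_Collect_eq prod.case
      apply (rule exI[of _ l], rule exI[of _ r], rule exI[of _ rl'], rule exI[of _ Q], rule exI[of _ \<mu>])
      using vid ne Qf par vq d1 d2 mguE ex unfolding E_def t0_def s0_def u0_def by blast
    have pos\<mu>: "\<forall>p\<in>Q. is_pos (subst l \<mu>) p" using isp is_pos_subst by blast
    have "\<forall>(\<theta>::'v \<Rightarrow> ('f,'v) trm) (\<rho>'::pos \<Rightarrow> 'v \<Rightarrow> ('f,'v) trm). (\<forall>q\<in>Q. subt_at (subst l \<theta>) q = subst (fst (rl q)) (\<rho>' q)) \<longrightarrow>
              (\<exists>\<tau>. subst s0 \<tau> = subst l \<theta> \<and>
                   subst t0 \<tau> = prep (subst l \<theta>) Q (\<lambda>q. subst (snd (rl q)) (\<rho>' q)) \<and>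
                   subst u0 \<tau> = subst r \<theta>)"
    proof (intro allI impI)
      fix \<theta> :: "'v \<Rightarrow> ('f,'v) trm" and \<rho>' :: "pos \<Rightarrow> 'v \<Rightarrow> ('f,'v) trm"
      assume cond: "\<forall>q\<in>Q. subt_at (subst l \<theta>) q = subst (fst (rl q)) (\<rho>' q)"
      let ?\<tau> = "tau \<theta> \<rho>'"
      have U: "U ?\<tau>" using tau_U[OF cond] .
      have 1: "subst s0 ?\<tau> = subst l \<theta>" unfolding s0_def gen2[OF U] using tau_t[OF vl] .
      have 2: "subst u0 ?\<tau> = subst r \<theta>" unfolding u0_def gen2[OF U] using tau_t[OF vr0] .
      have "subst t0 ?\<tau> = subst (prep (subst l \<mu>) Q (\<lambda>p. subst (snd (rl' p)) \<mu>)) ?\<tau>"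
        unfolding t0_def using par_replace_prep[OF fin par pos\<mu>] by simp
      also have "\<dots> = prep (subst (subst l \<mu>) ?\<tau>) Q (\<lambda>p. subst (subst (snd (rl' p)) \<mu>) ?\<tau>)"
        using subst_prep[OF pos\<mu>] .
      also have "\<dots> = prep (subst l \<theta>) Q (\<lambda>p. subst (snd (rl' p)) ?\<tau>)"
        unfolding gen2[OF U] tau_t[OF vl] ..
      also have "\<dots> = prep (subst l \<theta>) Q (\<lambda>q. subst (snd (rl q)) (\<rho>' q))"
        using tau_rl2 by (intro prep_cong) auto
      finally show "\<exists>\<tau>. subst s0 \<tau> = subst l \<theta> \<and>
                   subst t0 \<tau> = prep (subst l \<theta>) Q (\<lambda>q. subst (snd (rl q)) (\<rho>' q)) \<and>
                   subst u0 \<tau> = subst r \<theta>" using 1 2 by blast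
    qed
    with pk show ?thesis by blast
  qed
qed



lemma trs_lhs: "trs L \<Longrightarrow> (l,r) \<in> L \<Longrightarrow> \<exists>f ls. l = Fun f ls"
proof -
  assume "trs L" "(l,r) \<in> L"
  from \<open>trs L\<close>[unfolded trs_def] \<open>(l,r) \<in> L\<close> have "case (l,r) of (l, r) \<Rightarrow> (\<nexists>x. l = Var x) \<and> vars_trm r \<subseteq> vars_trm l"
    by (rule bspec)
  then show ?thesis by (cases l) auto
qed

lemma par_Var_inv: "par L (Var x) t \<Longrightarrow> trs L \<Longrightarrow> t = Var x"
proof -
  assume p: "par L (Var x) t" and tL: "trs L"
  from p show ?thesis
  proof (cases rule: par.cases)
    case (par_root l r \<sigma>)
    then obtain f ls where "l = Fun f ls" using trs_lhs[OF tL] by blast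
    then show ?thesis using par_root(1) by simp
  qed auto
qed

lemma trs_mono: "trs R \<Longrightarrow> L \<subseteq> R \<Longrightarrow> trs L"
  unfolding trs_def by blast

lemma par_rs_mono: "par L a b \<Longrightarrow> L \<subseteq> R \<Longrightarrow> (a,b) \<in> (rs R)\<^sup>*"
  using par_rs[of L a b] rtrancl_mono[OF rs_mono[of L R]] by blast

context
  fixes R C :: "('f,'v) rule set"
  assumes inf: "infinite (UNIV :: 'v set)" and trs: "trs R" and ll: "left_linear R"
    and CR: "C \<subseteq> R" and cC: "CR (rs C)"
    and jn: "\<forall>(t, s, u) \<in> pcpeaks R. (t, u) \<in> joinable (rs R)"
begin

abbreviation "PP \<equiv> rs (PCPS R C)"

definition VAL where "VAL L t u = (\<exists>v. (t,v) \<in> {(a,b). par R a b} O (rs C)\<^sup>* \<and> (u,v) \<in> {(a,b). par L a b} O (rs C)\<^sup>*)"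

lemma root_peak:
  assumes R1: "R1 \<subseteq> R" and R2: "R2 \<subseteq> R" and lr: "(l,r) \<in> R1" and pu: "par R2 (subst l \<sigma>) u"
  shows "dec (rs R) PP (subst l \<sigma>) (subst r \<sigma>) u \<or>
    (\<exists>v. (subst r \<sigma>, v) \<in> {(a,b). par R2 a b} O (rs C)\<^sup>* \<and> (u,v) \<in> {(a,b). par R1 a b} O (rs C)\<^sup>*)"
proof -
  have lrR: "(l,r) \<in> R" using lr R1 by blast
  have lin: "linear_trm l" using ll lrR unfolding left_linear_def by auto
  obtain Q rl \<rho> \<sigma>'' where dc: "dc R2 l \<sigma> u (Q, rl, \<rho>, \<sigma>'')" using decomp[OF lin pu] by (metis prod_cases4)
  then have fin: "finite Q" and par: "parallel_set Q" and Qf: "Q \<subseteq> fun_poss l"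
    and rl2: "\<forall>q\<in>Q. rl q \<in> R2"
    and i1: "\<forall>q\<in>Q. subt_at (subst l \<sigma>) q = subst (fst (rl q)) (\<rho> q)"
    and i2: "\<forall>q\<in>Q. subt_at (subst l \<sigma>'') q = subst (fst (rl q)) (\<rho> q)"
    and ps: "\<forall>y. par R2 (\<sigma> y) (\<sigma>'' y)"
    and u: "u = prep (subst l \<sigma>'') Q (\<lambda>q. subst (snd (rl q)) (\<rho> q))"
    unfolding dc_def by auto
  have rl: "\<forall>q\<in>Q. rl q \<in> R" using rl2 R2 by blast
  have pr: "par R2 (subst r \<sigma>) (subst r \<sigma>'')" using ps by (intro par_subst2) auto
  have C_refl: "(w,w) \<in> (rs C)\<^sup>*" for w by simp
  have v1: "(subst r \<sigma>, subst r \<sigma>'') \<in> {(a,b). par R2 a b} O (rs C)\<^sup>*"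
    by (rule relcompI[of _ "subst r \<sigma>''"]) (use pr in auto)
  have v2: "(w,w) \<in> {(a,b). par R1 a b} O (rs C)\<^sup>*" for w
    by (rule relcompI[of _ w]) auto
  show ?thesis
  proof (cases "Q = {}")
    case True
    then have "u = subst l \<sigma>''" using u by simp
    then have "par R1 u (subst r \<sigma>'')" using par_root[OF lr] by simp
    then have "(u, subst r \<sigma>'') \<in> {(a,b). par R1 a b} O (rs C)\<^sup>*"
      by (intro relcompI[of _ "subst r \<sigma>''"]) auto
    with v1 show ?thesis by (intro disjI2 exI conjI)
  next
    case ne: False
    from inst[OF inf trs ll lrR fin ne par Qf rl i1] show ?thesis
    proof
      assume triv: "\<forall>(\<theta>::'v \<Rightarrow> ('f,'v) trm) (\<rho>'::pos \<Rightarrow> 'v \<Rightarrow> ('f,'v) trm). (\<forall>q\<in>Q. subt_at (subst l \<theta>) q = subst (fst (rl q)) (\<rho>' q)) \<longrightarrow>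
            prep (subst l \<theta>) Q (\<lambda>q. subst (snd (rl q)) (\<rho>' q)) = subst r \<theta>"
      then have "u = subst r \<sigma>''" using u i2 by blast
      then show ?thesis using v1 v2[of u] by (intro disjI2 exI conjI) auto
    next
      assume "\<exists>t0 s0 u0. (t0,s0,u0) \<in> pcpeaks R \<and>
            (\<forall>(\<theta>::'v \<Rightarrow> ('f,'v) trm) (\<rho>'::pos \<Rightarrow> 'v \<Rightarrow> ('f,'v) trm). (\<forall>q\<in>Q. subt_at (subst l \<theta>) q = subst (fst (rl q)) (\<rho>' q)) \<longrightarrow>
              (\<exists>\<tau>. subst s0 \<tau> = subst l \<theta> \<and>
                   subst t0 \<tau> = prep (subst l \<theta>) Q (\<lambda>q. subst (snd (rl q)) (\<rho>' q)) \<and>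
                   subst u0 \<tau> = subst r \<theta>))"
      then obtain t0 s0 u0 where pk: "(t0,s0,u0) \<in> pcpeaks R" and
        ins: "\<And>(\<theta>::'v \<Rightarrow> ('f,'v) trm) (\<rho>'::pos \<Rightarrow> 'v \<Rightarrow> ('f,'v) trm). (\<forall>q\<in>Q. subt_at (subst l \<theta>) q = subst (fst (rl q)) (\<rho>' q)) \<Longrightarrow>
              (\<exists>\<tau>. subst s0 \<tau> = subst l \<theta> \<and>
                   subst t0 \<tau> = prep (subst l \<theta>) Q (\<lambda>q. subst (snd (rl q)) (\<rho>' q)) \<and>
                   subst u0 \<tau> = subst r \<theta>)" by blast
      have j0: "(t0,u0) \<in> joinable (rs R)" using jn pk by blast
      show ?thesis
      proof (cases "(t0,u0) \<in> conv (rs C)")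
        case True
        obtain \<tau> where e1: "subst t0 \<tau> = u" and e2: "subst u0 \<tau> = subst r \<sigma>''"
          using ins[OF i2] u by blast
        have "(u, subst r \<sigma>'') \<in> conv (rs C)" using rs_subst_conv[OF True, of \<tau>] e1 e2 by simp
        then have "(u, subst r \<sigma>'') \<in> joinable (rs C)" by (rule CR_conv_joinable[OF cC])
        then obtain w where uw: "(u,w) \<in> (rs C)\<^sup>*" and rw: "(subst r \<sigma>'', w) \<in> (rs C)\<^sup>*"
          unfolding joinable_iff by blast
        have "(subst r \<sigma>, w) \<in> {(a,b). par R2 a b} O (rs C)\<^sup>*" using pr rw by (intro relcompI) auto
        moreover have "(u, w) \<in> {(a,b). par R1 a b} O (rs C)\<^sup>*" using par_refl[of R1 u] uw by (intro relcompI) auto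
        ultimately show ?thesis by (intro disjI2 exI conjI)
      next
        case False
        have nc: "(t0,u0) \<notin> conv (rstep C)" using False by (simp add: rstep_rs)
        have P1: "(s0,t0) \<in> PCPS R C" unfolding PCPS_def using pk nc by blast
        have P2: "(s0,u0) \<in> PCPS R C" unfolding PCPS_def using pk nc by blast
        obtain \<tau> where e0: "subst s0 \<tau> = subst l \<sigma>" and e1: "subst t0 \<tau> = prep (subst l \<sigma>) Q (\<lambda>q. subst (snd (rl q)) (\<rho> q))"
          and e2: "subst u0 \<tau> = subst r \<sigma>" using ins[OF i1] by blast
        define x2 where "x2 = prep (subst l \<sigma>) Q (\<lambda>q. subst (snd (rl q)) (\<rho> q))"
        have s1: "(subst l \<sigma>, subst r \<sigma>) \<in> PP" using rs_root[OF P2, of \<tau>] e0 e2 by simp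
        have s2: "(subst l \<sigma>, x2) \<in> PP" using rs_root[OF P1, of \<tau>] e0 e1 unfolding x2_def by simp
        have isp: "\<forall>q\<in>Q. is_pos l q" using Qf fun_poss_is_pos by blast
        have "\<And>y. (\<sigma> y, \<sigma>'' y) \<in> (rs R)\<^sup>*" using ps R2 par_rs_mono by metis
        from prep_rtrancl[OF isp this] have x2u: "(x2, u) \<in> (rs R)\<^sup>*" unfolding x2_def u .
        have "(subst t0 \<tau>, subst u0 \<tau>) \<in> joinable (rs R)" using rs_subst_joinable[OF j0] .
        then have jj: "(x2, subst r \<sigma>) \<in> joinable (rs R)" using e1 e2 unfolding x2_def by simp
        then have jj2: "(subst r \<sigma>, x2) \<in> joinable (rs R)" unfolding joinable_iff by (elim exE conjE) (intro exI conjI)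
        have "dec (rs R) PP (subst l \<sigma>) (subst r \<sigma>) u"
          unfolding dec_def
          by (rule exI[of _ "subst r \<sigma>"], rule exI[of _ x2]) (simp add: s1 s2 x2u jj2)
        then show ?thesis by blast
      qed
    qed
  qed
qed

lemma peak: "par L x t \<Longrightarrow> L \<subseteq> R \<Longrightarrow> par R x u \<Longrightarrow> dec (rs R) PP x t u \<or> VAL L t u"
proof (induction x arbitrary: t u)
  case (Var x)
  have tL: "trs L" using trs_mono[OF trs Var(2)] .
  have "t = Var x" using par_Var_inv[OF Var(1) tL] .
  moreover have "u = Var x" using par_Var_inv[OF Var(3) trs] .
  moreover have "(Var x, Var x) \<in> {(a,b). par R a b} O (rs C)\<^sup>*" by (rule relcompI) auto
  moreover have "(Var x, Var x) \<in> {(a,b). par L a b} O (rs C)\<^sup>*" by (rule relcompI) auto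
  ultimately show ?case unfolding VAL_def by blast
next
  case (Fun f xs)
  show ?case
  proof (cases rule: par.cases[OF Fun.prems(1)])
    case (1 y)
    then show ?thesis by simp
  next
    case (3 l r \<sigma>)
    have pr: "par R (subst l \<sigma>) u" using Fun.prems(3) 3(1) by simp
    from root_peak[OF Fun.prems(2) order_refl 3(3) pr]
    show ?thesis unfolding VAL_def 3(1) 3(2) .
  next
    case (2 ss ts f')
    then have t: "t = Fun f ts" and lt: "list_all2 (par L) xs ts" by auto
    show ?thesis
    proof (cases rule: par.cases[OF Fun.prems(3)])
      case (1 y) then show ?thesis by simp
    next
      case (3 l r \<sigma>)
      have pl: "par L (subst l \<sigma>) t" using Fun.prems(1) 3(1) by simp
      from root_peak[OF order_refl Fun.prems(2) 3(3) pl]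
      have "dec (rs R) PP (Fun f xs) u t \<or> (\<exists>v. (u, v) \<in> {(a,b). par L a b} O (rs C)\<^sup>* \<and> (t,v) \<in> {(a,b). par R a b} O (rs C)\<^sup>*)"
        unfolding 3(1) 3(2) .
      then show ?thesis
      proof
        assume "dec (rs R) PP (Fun f xs) u t"
        then show ?thesis using dec_sym by (intro disjI1) 
      next
        assume "\<exists>v. (u, v) \<in> {(a,b). par L a b} O (rs C)\<^sup>* \<and> (t,v) \<in> {(a,b). par R a b} O (rs C)\<^sup>*"
        then show ?thesis unfolding VAL_def by (elim exE conjE) (intro disjI2 exI conjI)
      qed
    next
      case (2 ss' us f'')
      then have u: "u = Fun f us" and lu: "list_all2 (par R) xs us" by auto
      let ?n = "length xs"
      have lts: "length ts = ?n" and lus: "length us = ?n" using lt lu by (auto dest: list_all2_lengthD)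
      have IH: "dec (rs R) PP (xs!i) (ts!i) (us!i) \<or> VAL L (ts!i) (us!i)" if i: "i < ?n" for i
        using Fun.IH[OF nth_mem[OF i]] list_all2_nthD[OF lt i] list_all2_nthD[OF lu i] Fun.prems(2) by blast
      have xsR: "(xs!j, ts!j) \<in> (rs R)\<^sup>*" "(xs!j, us!j) \<in> (rs R)\<^sup>*" if "j < ?n" for j
        using list_all2_nthD[OF lt that] list_all2_nthD[OF lu that] Fun.prems(2) par_rs_mono order_refl by metis+
      show ?thesis
      proof (cases "\<exists>i<?n. dec (rs R) PP (xs!i) (ts!i) (us!i)")
        case True
        then obtain i where i: "i < ?n" and "dec (rs R) PP (xs!i) (ts!i) (us!i)" by blast
        then obtain x1 x2 where p1: "(xs!i,x1) \<in> PP" and p2: "(xs!i,x2) \<in> PP" and x1t: "(x1,ts!i) \<in> (rs R)\<^sup>*"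
          and x2u: "(x2,us!i) \<in> (rs R)\<^sup>*" and j: "(x1,x2) \<in> joinable (rs R)" unfolding dec_def by blast
        have P1: "(Fun f xs, Fun f (xs[i:=x1])) \<in> PP" using rs_ctxt[OF p1 i, of f] by simp
        have P2: "(Fun f xs, Fun f (xs[i:=x2])) \<in> PP" using rs_ctxt[OF p2 i, of f] by simp
        have T1: "(Fun f (xs[i:=x1]), Fun f ts) \<in> (rs R)\<^sup>*"
          by (rule rs_args_rtrancl) (use i x1t xsR lts in \<open>auto simp: list_all2_conv_all_nth nth_list_update\<close>)
        have T2: "(Fun f (xs[i:=x2]), Fun f us) \<in> (rs R)\<^sup>*"
          by (rule rs_args_rtrancl) (use i x2u xsR lus in \<open>auto simp: list_all2_conv_all_nth nth_list_update\<close>)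
        have J: "(Fun f (xs[i:=x1]), Fun f (xs[i:=x2])) \<in> joinable (rs R)" using rs_ctxt_joinable[OF j i] .
        have "dec (rs R) PP (Fun f xs) (Fun f ts) (Fun f us)" unfolding dec_def
          by (rule exI[of _ "Fun f (xs[i:=x1])"], rule exI[of _ "Fun f (xs[i:=x2])"]) (simp add: P1 P2 T1 T2 J)
        then show ?thesis using Fun.prems t u by simp
      next
        case False
        then have V: "VAL L (ts!i) (us!i)" if "i < ?n" for i using IH that by blast
        have "\<forall>i. \<exists>w. i < ?n \<longrightarrow> (par R (ts!i) (fst w) \<and> (fst w, fst (snd w)) \<in> (rs C)\<^sup>* \<and>
               par L (us!i) (snd (snd w)) \<and> (snd (snd w), fst (snd w)) \<in> (rs C)\<^sup>*)"
        proof
          fix i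
          show "\<exists>w. i < ?n \<longrightarrow> (par R (ts!i) (fst w) \<and> (fst w, fst (snd w)) \<in> (rs C)\<^sup>* \<and>
               par L (us!i) (snd (snd w)) \<and> (snd (snd w), fst (snd w)) \<in> (rs C)\<^sup>*)"
          proof (cases "i < ?n")
            case True
            then obtain v a b where "par R (ts!i) a" "(a,v) \<in> (rs C)\<^sup>*" "par L (us!i) b" "(b,v) \<in> (rs C)\<^sup>*"
              using V[OF True] unfolding VAL_def by blast
            then show ?thesis by (intro exI[of _ "(a,v,b)"]) simp
          qed simp
        qed
        then obtain W where W: "\<And>i. i < ?n \<Longrightarrow> par R (ts!i) (fst (W i)) \<and> (fst (W i), fst (snd (W i))) \<in> (rs C)\<^sup>* \<and>
               par L (us!i) (snd (snd (W i))) \<and> (snd (snd (W i)), fst (snd (W i))) \<in> (rs C)\<^sup>*" by metis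
        define as where "as = map (\<lambda>i. fst (W i)) [0..<?n]"
        define vs where "vs = map (\<lambda>i. fst (snd (W i))) [0..<?n]"
        define bs where "bs = map (\<lambda>i. snd (snd (W i))) [0..<?n]"
        have a1: "par R (Fun f ts) (Fun f as)" by (rule par_Fun) (use W lts in \<open>auto simp: as_def list_all2_conv_all_nth\<close>)
        have a2: "(Fun f as, Fun f vs) \<in> (rs C)\<^sup>*"
          by (rule rs_args_rtrancl) (use W in \<open>auto simp: as_def vs_def list_all2_conv_all_nth\<close>)
        have b1: "par L (Fun f us) (Fun f bs)" by (rule par_Fun) (use W lus in \<open>auto simp: bs_def list_all2_conv_all_nth\<close>)
        have b2: "(Fun f bs, Fun f vs) \<in> (rs C)\<^sup>*"
          by (rule rs_args_rtrancl) (use W in \<open>auto simp: bs_def vs_def list_all2_conv_all_nth\<close>)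
        have "(Fun f ts, Fun f vs) \<in> {(a,b). par R a b} O (rs C)\<^sup>*" using a1 a2 by (intro relcompI) auto
        moreover have "(Fun f us, Fun f vs) \<in> {(a,b). par L a b} O (rs C)\<^sup>*" using b1 b2 by (intro relcompI) auto
        ultimately show ?thesis unfolding VAL_def t u by (intro disjI2 exI conjI)
      qed
    qed
  qed
qed

end



theorem theorem11:
  fixes R C :: "('f,'v) rule set"
  assumes "infinite (UNIV :: 'v set)"
    and "trs R" and "left_linear R"
    and "C \<subseteq> R" and "CR (rstep C)"
    and "\<forall>(t, s, u) \<in> pcpeaks R. (t, u) \<in> joinable (rstep R)"
    and "SN_rel (rstep (PCPS R C)) (rstep R)"
  shows "CR (rstep R)"
proof -
  have jn: "\<forall>(t, s, u) \<in> pcpeaks R. (t, u) \<in> joinable (rs R)" using assms(6) by (simp add: rstep_rs)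
  have cC: "CR (rs C)" using assms(5) by (simp add: rstep_rs)
  have SN: "SN_rel (rs (PCPS R C)) (rs R)" using assms(7) by (simp add: rstep_rs)
  note pk = peak[OF assms(1,2,3,4) cC jn]
  interpret a: absCR "rs R" "{(a,b). par R a b}" "rs C" "rs (PCPS R C)"
  proof
    show "rs R \<subseteq> {(a,b). par R a b}" using rs_par by auto
    show "{(a,b). par R a b} \<subseteq> (rs R)\<^sup>*" using par_rs by auto
    show "(x,x) \<in> {(a,b). par R a b}" for x by simp
    show "rs C \<subseteq> rs R" using rs_mono[OF assms(4)] .
    show "CR (rs C)" by (rule cC)
    show "SN_rel (rs (PCPS R C)) (rs R)" by (rule SN)
  next
    fix x t u assume xt: "(x,t) \<in> rs C" and xu: "(x,u) \<in> {(a,b). par R a b}"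
    have "par C x t" using rs_par[OF xt] .
    from pk[OF this assms(4)] xu have "dec (rs R) (rs (PCPS R C)) x t u \<or> VAL R C C t u" by simp
    then show "(\<exists>v. (t,v) \<in> {(a,b). par R a b} O (rs C)\<^sup>* \<and> (u,v) \<in> (rs C)\<^sup>*) \<or> dec (rs R) (rs (PCPS R C)) x t u"
    proof
      assume V: "VAL R C C t u"
      obtain v where tv: "(t,v) \<in> {(a,b). par R a b} O (rs C)\<^sup>*" and uv: "(u,v) \<in> {(a,b). par C a b} O (rs C)\<^sup>*"
        using V[unfolded VAL_def[OF assms(1,2,3,4) cC jn]] by blast
      from uv obtain b where ub: "par C u b" and bv: "(b,v) \<in> (rs C)\<^sup>*" by auto
      have "(u,v) \<in> (rs C)\<^sup>*" using par_rs[OF ub] bv by (rule rtrancl_trans)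
      with tv show ?thesis by blast
    qed simp
  next
    fix x t u assume xt: "(x,t) \<in> {(a,b). par R a b}" and xu: "(x,u) \<in> {(a,b). par R a b}"
    from pk[of R x t u, OF _ order_refl] xt xu have D: "dec (rs R) (rs (PCPS R C)) x t u \<or> VAL R C R t u" by simp
    show "(\<exists>v. (t,v) \<in> {(a,b). par R a b} O (rs C)\<^sup>* \<and> (u,v) \<in> {(a,b). par R a b} O (rs C)\<^sup>*) \<or> dec (rs R) (rs (PCPS R C)) x t u"
      using D[unfolded VAL_def[OF assms(1,2,3,4) cC jn]] by blast
  qed
  from a.CR show ?thesis by (simp add: rstep_rs)
qed


end
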